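(* Let $p$ be a prime with $p\equiv -1\pmod 6$. Then for all integers $\alpha\ge1$ and $n\ge0$, \[ b_{8}\!\left(p^{2\alpha}n+\frac{(24i+7p)p^{2\alpha-1}-7}{24}\right)\equiv 0 \pmod 2 \] for each $i=1,\ldots,p-1$.
   Context: For a positive integer $\ell$, $b_\ell(n)$ denotes the number of partitions of $n$ having no part divisible by $\ell$. *)

theory Defs
  imports Main "HOL-Library.Multiset" "HOL-Computational_Algebra.Primes"
begin

definition b :: "nat \<Rightarrow> nat \<Rightarrow> nat" where
  "b l n = card {M :: nat multiset. (\<forall>x\<in>#M. 0 < x \<and> \<not> l dvd x) \<and> sum_mset M = n}"

end

theory Submission
  imports Defs "HOL-Library.Z2" "HOL-Computational_Algebra.Formal_Power_Series" "HOL-Number_Theory.Number_Theory"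
begin

unbundle fps_syntax



definition cnt :: "'a set \<Rightarrow> ('a \<Rightarrow> nat) \<Rightarrow> bit fps" where
  "cnt X f = Abs_fps (\<lambda>n. of_nat (card {x\<in>X. f x = n}))"

definition finfib :: "'a set \<Rightarrow> ('a \<Rightarrow> nat) \<Rightarrow> bool" where
  "finfib X f \<longleftrightarrow> (\<forall>n. finite {x\<in>X. f x = n})"

lemma cnt_nth: "cnt X f $ n = of_nat (card {x\<in>X. f x = n})"
  by (simp add: cnt_def)

lemma of_nat_bit: "(of_nat n :: bit) = (if even n then 0 else 1)"
  by (induction n) auto

lemma of_nat_bit_eq: "(of_nat m :: bit) = of_nat n \<longleftrightarrow> even m = even n"
  by (simp add: of_nat_bit)

lemma cnt_mult:
  assumes "finfib X f" "finfib Y g"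
  shows "cnt X f * cnt Y g = cnt (X \<times> Y) (\<lambda>(x,y). f x + g y)"
proof (rule fps_ext)
  fix n
  let ?A = "\<lambda>i. {x\<in>X. f x = i}" and ?B = "\<lambda>i. {y\<in>Y. g y = i}"
  have "(cnt X f * cnt Y g) $ n = (\<Sum>i=0..n. of_nat (card (?A i) * card (?B (n-i))) :: bit)"
    by (simp add: fps_mult_nth cnt_nth)
  also have "\<dots> = of_nat (\<Sum>i=0..n. card (?A i \<times> ?B (n-i)))"
    by (simp add: card_cartesian_product)
  also have "(\<Sum>i=0..n. card (?A i \<times> ?B (n-i))) = card (\<Union>i\<in>{0..n}. ?A i \<times> ?B (n-i))"
    using assms unfolding finfib_def
    by (intro card_UN_disjoint[symmetric]) auto
  also have "(\<Union>i\<in>{0..n}. ?A i \<times> ?B (n-i)) = {p \<in> X \<times> Y. (\<lambda>(x,y). f x + g y) p = n}"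
    by auto
  finally show "(cnt X f * cnt Y g) $ n = cnt (X \<times> Y) (\<lambda>(x,y). f x + g y) $ n"
    by (simp add: cnt_nth)
qed

lemma finfib_mult:
  assumes "finfib X f" "finfib Y g"
  shows "finfib (X \<times> Y) (\<lambda>(x,y). f x + g y)"
  unfolding finfib_def
proof
  fix n
  have "{p \<in> X \<times> Y. (\<lambda>(x,y). f x + g y) p = n} \<subseteq> (\<Union>i\<in>{0..n}. {x\<in>X. f x = i} \<times> {y\<in>Y. g y = n - i})"
    by auto
  moreover have "finite (\<Union>i\<in>{0..n}. {x\<in>X. f x = i} \<times> {y\<in>Y. g y = n - i})"
    using assms unfolding finfib_def by auto
  ultimately show "finite {p \<in> X \<times> Y. (\<lambda>(x,y). f x + g y) p = n}"
    by (rule finite_subset)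
qed

lemma cnt_bij:
  assumes "bij_betw h X Y" "\<And>x. x \<in> X \<Longrightarrow> g (h x) = f x"
  shows "cnt X f = cnt Y g"
proof (rule fps_ext)
  fix n
  have "bij_betw h {x\<in>X. f x = n} {y\<in>Y. g y = n}"
    using assms unfolding bij_betw_def inj_on_def by (auto simp: image_iff)
  then have "card {x\<in>X. f x = n} = card {y\<in>Y. g y = n}"
    by (rule bij_betw_same_card)
  then show "cnt X f $ n = cnt Y g $ n" by (simp add: cnt_nth)
qed

lemma finfib_bij:
  assumes "bij_betw h X Y" "\<And>x. x \<in> X \<Longrightarrow> g (h x) = f x" "finfib Y g"
  shows "finfib X f"
  unfolding finfib_def
proof
  fix n
  have "inj_on h {x\<in>X. f x = n}" using assms(1) unfolding bij_betw_def inj_on_def by auto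
  moreover have "h ` {x\<in>X. f x = n} \<subseteq> {y\<in>Y. g y = n}" using assms(1,2) by (auto simp: bij_betw_def)
  ultimately show "finite {x\<in>X. f x = n}"
    using assms(3) unfolding finfib_def by (meson finite_imageD finite_subset)
qed

lemma cnt_parity:
  assumes "\<And>n. even (card {x\<in>X. f x = n}) = even (card {y\<in>Y. g y = n})"
  shows "cnt X f = cnt Y g"
  using assms by (intro fps_ext) (simp add: cnt_nth of_nat_bit_eq)

lemma cnt_scale:
  assumes "cnt X f = cnt Y g" "c > 0"
  shows "cnt X (\<lambda>x. c * f x) = cnt Y (\<lambda>y. c * g y)"
proof (rule fps_ext)
  fix n
  show "cnt X (\<lambda>x. c * f x) $ n = cnt Y (\<lambda>y. c * g y) $ n"
  proof (cases "c dvd n")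
    case True
    then obtain m where m: "n = c * m" by auto
    have e: "{x\<in>X. c * f x = n} = {x\<in>X. f x = m}" "{y\<in>Y. c * g y = n} = {y\<in>Y. g y = m}"
      using m assms(2) by auto
    have "cnt X f $ m = cnt Y g $ m" using assms(1) by simp
    then show ?thesis unfolding cnt_nth e .
  next
    case False
    then have e: "{x\<in>X. c * f x = n} = {}" "{y\<in>Y. c * g y = n} = {}" by auto
    show ?thesis unfolding cnt_nth e by simp
  qed
qed

lemma cnt_unscale:
  assumes "cnt X (\<lambda>x. c * f x) = cnt Y (\<lambda>y. c * g y)" "c > 0"
  shows "cnt X f = cnt Y g"
proof (rule fps_ext)
  fix n
  have "{x\<in>X. c * f x = c * n} = {x\<in>X. f x = n}" "{y\<in>Y. c * g y = c*n} = {y\<in>Y. g y = n}"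
    using assms(2) by auto
  then show "cnt X f $ n = cnt Y g $ n"
    using arg_cong[OF assms(1), of "\<lambda>F. F $ (c*n)"] by (simp add: cnt_nth)
qed

lemma finfib_scale:
  assumes "finfib X f" "c > 0"
  shows "finfib X (\<lambda>x. c * f x)"
  unfolding finfib_def
proof
  fix n
  have "{x\<in>X. c * f x = n} \<subseteq> {x\<in>X. f x = n div c}" using assms(2) by auto
  then show "finite {x\<in>X. c * f x = n}" using assms(1) unfolding finfib_def by (meson finite_subset)
qed



lemma involution_parity:
  assumes "finite X" "\<And>x. x \<in> X \<Longrightarrow> \<sigma> x \<in> X" "\<And>x. x \<in> X \<Longrightarrow> \<sigma> (\<sigma> x) = x"
  shows "even (card X) = even (card {x\<in>X. \<sigma> x = x})"
  using assms
proof (induction "card X" arbitrary: X rule: less_induct)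
  case less
  show ?case
  proof (cases "\<forall>x\<in>X. \<sigma> x = x")
    case True
    then have "{x\<in>X. \<sigma> x = x} = X" by auto
    then show ?thesis by simp
  next
    case False
    then obtain x where x: "x \<in> X" "\<sigma> x \<noteq> x" by auto
    let ?X' = "X - {x, \<sigma> x}"
    have sx: "\<sigma> x \<in> X" using less(3) x by blast
    have sub: "{x, \<sigma> x} \<subseteq> X" using x sx by blast
    have c2: "card {x, \<sigma> x} = 2" using x(2) by simp
    have c3: "card ?X' = card X - card {x, \<sigma> x}"
      by (rule card_Diff_subset) (use sub in auto)
    have "card {x, \<sigma> x} \<le> card X" by (rule card_mono[OF less(2) sub])
    then have c: "card X = card ?X' + 2"
      using c2 c3 by linarith
    have IH: "even (card ?X') = even (card {y\<in>?X'. \<sigma> y = y})"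
    proof (rule less(1))
      show "card ?X' < card X" using c by linarith
      show "finite ?X'" using less(2) by blast
      fix y assume y: "y \<in> ?X'"
      then have yX: "y \<in> X" "y \<noteq> x" "y \<noteq> \<sigma> x" by auto
      show "\<sigma> (\<sigma> y) = y" using less(4)[OF yX(1)] .
      have "\<sigma> y \<noteq> x"
      proof
        assume "\<sigma> y = x"
        then have "\<sigma> (\<sigma> y) = \<sigma> x" by simp
        then show False using less(4)[OF yX(1)] yX(3) by simp
      qed
      moreover have "\<sigma> y \<noteq> \<sigma> x"
      proof
        assume "\<sigma> y = \<sigma> x"
        then have "\<sigma> (\<sigma> y) = \<sigma> (\<sigma> x)" by simp
        then show False using less(4)[OF yX(1)] less(4)[OF x(1)] yX(2) by simp
      qed
      ultimately show "\<sigma> y \<in> ?X'" using less(3)[OF yX(1)] by blast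
    qed
    have "{y\<in>?X'. \<sigma> y = y} = {y\<in>X. \<sigma> y = y}" using x(2) less(4)[OF x(1)] by auto
    then show ?thesis using IH c by simp
  qed
qed

definition Gs :: "nat set \<Rightarrow> bit fps" where
  "Gs I = cnt {S. finite S \<and> S \<subseteq> I} (\<lambda>S. \<Sum>S)"

definition Hs :: "nat set \<Rightarrow> bit fps" where
  "Hs I = cnt {M. set_mset M \<subseteq> I} sum_mset"

lemma finfib_Gs: "finfib {S. finite S \<and> S \<subseteq> I} (\<lambda>S. \<Sum>S)"
  unfolding finfib_def
proof
  fix n
  have "{S \<in> {S. finite S \<and> S \<subseteq> I}. \<Sum>S = n} \<subseteq> Pow {..n}"
    using member_le_sum by fastforce
  then show "finite {S \<in> {S. finite S \<and> S \<subseteq> I}. \<Sum>S = n}"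
    by (rule finite_subset) simp
qed

lemma size_le_sum_mset: "0 \<notin># M \<Longrightarrow> size M \<le> sum_mset (M :: nat multiset)"
  by (induction M) auto

lemma finfib_Hs:
  assumes "0 \<notin> I"
  shows "finfib {M. set_mset M \<subseteq> I} sum_mset"
  unfolding finfib_def
proof
  fix n
  have "{M \<in> {M. set_mset M \<subseteq> I}. sum_mset M = n} \<subseteq> mset ` {xs. set xs \<subseteq> {..n} \<and> length xs \<le> n}"
  proof
    fix M assume M: "M \<in> {M \<in> {M. set_mset M \<subseteq> I}. sum_mset M = n}"
    obtain xs where xs: "mset xs = M" using ex_mset by blast
    have "size M \<le> n" using M assms size_le_sum_mset[of M] by auto
    moreover have "set xs \<subseteq> {..n}"
    proof
      fix x assume "x \<in> set xs"
      then have "x \<in># M" using xs by auto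
      then have "x \<le> sum_mset M" using sum_mset.remove[of x M] by simp
      then show "x \<in> {..n}" using M by auto
    qed
    ultimately show "M \<in> mset ` {xs. set xs \<subseteq> {..n} \<and> length xs \<le> n}"
      using xs by auto
  qed
  then show "finite {M \<in> {M. set_mset M \<subseteq> I}. sum_mset M = n}"
    by (rule finite_subset) (simp add: finite_lists_length_le)
qed



lemma Gs_union:
  assumes "I \<inter> J = {}"
  shows "Gs (I \<union> J) = Gs I * Gs J"
proof -
  have "Gs I * Gs J = cnt ({S. finite S \<and> S \<subseteq> I} \<times> {S. finite S \<and> S \<subseteq> J}) (\<lambda>(x,y). \<Sum>x + \<Sum>y)"
    unfolding Gs_def by (rule cnt_mult[OF finfib_Gs finfib_Gs])
  also have "\<dots> = Gs (I \<union> J)" unfolding Gs_def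
  proof (rule cnt_bij[where h = "\<lambda>(x,y). x \<union> y"])
    show "bij_betw (\<lambda>(x,y). x \<union> y) ({S. finite S \<and> S \<subseteq> I} \<times> {S. finite S \<and> S \<subseteq> J}) {S. finite S \<and> S \<subseteq> I \<union> J}"
      by (rule bij_betw_byWitness[where f' = "\<lambda>S. (S \<inter> I, S \<inter> J)"]) (use assms in auto)
    fix p assume "p \<in> {S. finite S \<and> S \<subseteq> I} \<times> {S. finite S \<and> S \<subseteq> J}"
    then show "\<Sum>((\<lambda>(x,y). x \<union> y) p) = (\<lambda>(x,y). \<Sum>x + \<Sum>y) p"
      using assms by (auto intro!: sum.union_disjoint)
  qed
  finally show ?thesis by simp
qed



lemma Hs_union:
  assumes "I \<inter> J = {}" "0 \<notin> I" "0 \<notin> J"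
  shows "Hs (I \<union> J) = Hs I * Hs J"
proof -
  have "Hs I * Hs J = cnt ({M. set_mset M \<subseteq> I} \<times> {M. set_mset M \<subseteq> J}) (\<lambda>(x,y). sum_mset x + sum_mset y)"
    unfolding Hs_def by (rule cnt_mult[OF finfib_Hs finfib_Hs]) (use assms in auto)
  also have "\<dots> = Hs (I \<union> J)" unfolding Hs_def
  proof (rule cnt_bij[where h = "\<lambda>(x,y). x + y"])
    show "bij_betw (\<lambda>(x,y). x + y) ({M. set_mset M \<subseteq> I} \<times> {M. set_mset M \<subseteq> J}) {M. set_mset M \<subseteq> I \<union> J}"
    proof (rule bij_betw_byWitness[where f' = "\<lambda>M. (filter_mset (\<lambda>x. x \<in> I) M, filter_mset (\<lambda>x. x \<in> J) M)"])
      show "\<forall>a\<in>{M. set_mset M \<subseteq> I} \<times> {M. set_mset M \<subseteq> J}.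
         (filter_mset (\<lambda>x. x \<in> I) ((\<lambda>(x,y). x + y) a), filter_mset (\<lambda>x. x \<in> J) ((\<lambda>(x,y). x + y) a)) = a"
      proof
        fix a assume a: "a \<in> {M. set_mset M \<subseteq> I} \<times> {M. set_mset M \<subseteq> J}"
        obtain x y where xy: "a = (x,y)" by (cases a)
        have "filter_mset (\<lambda>z. z \<in> I) x = x" "filter_mset (\<lambda>z. z \<in> I) y = {#}"
          "filter_mset (\<lambda>z. z \<in> J) x = {#}" "filter_mset (\<lambda>z. z \<in> J) y = y"
          using a xy assms(1) by (auto simp: filter_mset_eq_conv filter_empty_mset)
        then show "(filter_mset (\<lambda>x. x \<in> I) ((\<lambda>(x,y). x + y) a), filter_mset (\<lambda>x. x \<in> J) ((\<lambda>(x,y). x + y) a)) = a"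
          using xy by simp
      qed
      show "\<forall>a'\<in>{M. set_mset M \<subseteq> I \<union> J}.
         (\<lambda>(x,y). x + y) (filter_mset (\<lambda>x. x \<in> I) a', filter_mset (\<lambda>x. x \<in> J) a') = a'"
      proof
        fix M assume M: "M \<in> {M. set_mset M \<subseteq> I \<union> J}"
        have "filter_mset (\<lambda>x. x \<in> J) M = filter_mset (\<lambda>x. \<not> x \<in> I) M"
          using M assms(1) by (intro filter_mset_cong) auto
        then show "(\<lambda>(x,y). x + y) (filter_mset (\<lambda>x. x \<in> I) M, filter_mset (\<lambda>x. x \<in> J) M) = M"
          by (simp add: multiset_partition[symmetric])
      qed
    qed auto
    fix p assume "p \<in> {M. set_mset M \<subseteq> I} \<times> {M. set_mset M \<subseteq> J}"
    then show "sum_mset ((\<lambda>(x,y). x + y) p) = (\<lambda>(x,y). sum_mset x + sum_mset y) p" by auto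
  qed
  finally show ?thesis by simp
qed



lemma cnt_one: "cnt {()} (\<lambda>_. 0) = 1"
  by (rule fps_ext) (simp add: cnt_nth)



lemma Gs_scale:
  assumes "c > 0"
  shows "Gs ((*) c ` I) = cnt {S. finite S \<and> S \<subseteq> I} (\<lambda>S. c * \<Sum>S)"
  unfolding Gs_def
proof (rule sym, rule cnt_bij[where h = "image ((*) c)"])
  have inj: "inj ((*) c)" using assms by (auto intro: injI)
  show "bij_betw (image ((*) c)) {S. finite S \<and> S \<subseteq> I} {S. finite S \<and> S \<subseteq> (*) c ` I}"
    unfolding bij_betw_def
  proof
    show "inj_on (image ((*) c)) {S. finite S \<and> S \<subseteq> I}"
      using inj by (auto simp: inj_on_def inj_image_eq_iff)
    show "image ((*) c) ` {S. finite S \<and> S \<subseteq> I} = {S. finite S \<and> S \<subseteq> (*) c ` I}"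
    proof
      show "image ((*) c) ` {S. finite S \<and> S \<subseteq> I} \<subseteq> {S. finite S \<and> S \<subseteq> (*) c ` I}" by auto
      show "{S. finite S \<and> S \<subseteq> (*) c ` I} \<subseteq> image ((*) c) ` {S. finite S \<and> S \<subseteq> I}"
      proof
        fix T assume T: "T \<in> {S. finite S \<and> S \<subseteq> (*) c ` I}"
        then obtain S where S: "S \<subseteq> I" "T = (*) c ` S" by (auto simp: subset_image_iff)
        then have "finite S" using T inj by (auto simp: finite_image_iff inj_on_subset)
        then show "T \<in> image ((*) c) ` {S. finite S \<and> S \<subseteq> I}" using S by auto
      qed
    qed
  qed
  fix S assume "S \<in> {S. finite S \<and> S \<subseteq> I}"
  then show "\<Sum>((*) c ` S) = c * \<Sum>S"
    using inj by (simp add: sum.reindex inj_on_subset sum_distrib_left)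
qed

lemma Gs_double: "Gs I * Gs I = Gs ((*) 2 ` I)"
proof -
  let ?X = "{S. finite S \<and> S \<subseteq> I}"
  have "Gs I * Gs I = cnt (?X \<times> ?X) (\<lambda>(x,y). \<Sum>x + \<Sum>y)"
    unfolding Gs_def by (rule cnt_mult[OF finfib_Gs finfib_Gs])
  have "cnt (?X \<times> ?X) (\<lambda>(x,y). \<Sum>x + \<Sum>y) = cnt ?X (\<lambda>S. 2 * \<Sum>S)"
  proof (rule cnt_parity)
    fix n
    let ?F = "{p \<in> ?X \<times> ?X. (\<lambda>(x,y). \<Sum>x + \<Sum>y) p = n}"
    have ff: "finfib (?X \<times> ?X) (\<lambda>(x,y). \<Sum>x + \<Sum>y)"
      by (rule finfib_mult[OF finfib_Gs finfib_Gs])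
    let ?sw = "\<lambda>p. (snd p, fst p)"
    have fin: "finite ?F" using ff unfolding finfib_def by (rule spec)
    have "even (card ?F) = even (card {p\<in>?F. ?sw p = p})"
    proof (rule involution_parity[OF fin])
      fix p assume "p \<in> ?F"
      then show "?sw p \<in> ?F" by (cases p) (simp add: add.commute)
      show "?sw (?sw p) = p" by simp
    qed
    have e2: "{p\<in>?F. ?sw p = p} = (\<lambda>S. (S,S)) ` {S \<in> ?X. 2 * \<Sum>S = n}"
    proof
      show "{p\<in>?F. ?sw p = p} \<subseteq> (\<lambda>S. (S,S)) ` {S \<in> ?X. 2 * \<Sum>S = n}"
      proof
        fix p assume p: "p \<in> {p\<in>?F. ?sw p = p}"
        obtain a b where ab: "p = (a,b)" by (cases p)
        from p have p1: "p \<in> ?F" and p2: "?sw p = p" by (simp_all only: mem_Collect_eq)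
        from p2 have "(b, a) = (a, b)" unfolding ab by (simp only: fst_conv snd_conv)
        then have ba: "b = a" by (metis prod.inject)
        from p1 ab have aX: "a \<in> ?X" and sa: "\<Sum>a + \<Sum>b = n" by (simp_all only: mem_Collect_eq mem_Times_iff fst_conv case_prod_conv)
        have "a \<in> {S \<in> ?X. 2 * \<Sum>S = n}" using aX sa ba by simp
        then show "p \<in> (\<lambda>S. (S,S)) ` {S \<in> ?X. 2 * \<Sum>S = n}" using ab ba by blast
      qed
      show "(\<lambda>S. (S,S)) ` {S \<in> ?X. 2 * \<Sum>S = n} \<subseteq> {p\<in>?F. ?sw p = p}"
      proof
        fix p assume "p \<in> (\<lambda>S. (S,S)) ` {S \<in> ?X. 2 * \<Sum>S = n}"
        then obtain a where a: "a \<in> ?X" "2 * \<Sum>a = n" "p = (a,a)" by blast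
        then show "p \<in> {p\<in>?F. ?sw p = p}" by simp
      qed
    qed
    have e3: "card ((\<lambda>S. (S,S)) ` {S \<in> ?X. 2 * \<Sum>S = n}) = card {S \<in> ?X. 2 * \<Sum>S = n}"
      by (rule card_image) (simp add: inj_on_def)
    show "even (card ?F) = even (card {S \<in> ?X. 2 * \<Sum>S = n})"
      using \<open>even (card ?F) = even (card {p\<in>?F. ?sw p = p})\<close> e2 e3 by simp
  qed
  then show ?thesis using \<open>Gs I * Gs I = _\<close> Gs_scale[of 2 I] by simp
qed



definition tog :: "nat multiset \<Rightarrow> nat set \<Rightarrow> nat \<Rightarrow> nat multiset \<times> nat set" where
  "tog M S x = (if x \<in> S then (add_mset x M, S - {x}) else (M - {#x#}, insert x S))"

definition sig :: "nat multiset \<times> nat set \<Rightarrow> nat multiset \<times> nat set" where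
  "sig p = tog (fst p) (snd p) (Min (set_mset (fst p) \<union> snd p))"

lemma tog_union:
  assumes "x \<in> set_mset M \<union> S"
  shows "set_mset (fst (tog M S x)) \<union> snd (tog M S x) = set_mset M \<union> S"
proof (cases "x \<in> S")
  case True
  then show ?thesis by (auto simp: tog_def)
next
  case False
  then have "x \<in># M" using assms by auto
  then have "set_mset M = insert x (set_mset (M - {#x#}))"
    by (metis insert_DiffM set_mset_add_mset_insert)
  then show ?thesis using False by (auto simp: tog_def)
qed

lemma tog_tog:
  assumes "x \<in> set_mset M \<union> S"
  shows "tog (fst (tog M S x)) (snd (tog M S x)) x = (M, S)"
proof (cases "x \<in> S")
  case True
  then show ?thesis by (auto simp: tog_def insert_absorb)
next
  case False
  then have "x \<in># M" using assms by auto
  then show ?thesis using False by (simp add: tog_def)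
qed

lemma tog_ne:
  assumes "x \<in> set_mset M \<union> S"
  shows "tog M S x \<noteq> (M, S)"
proof (cases "x \<in> S")
  case True
  then show ?thesis by (auto simp: tog_def)
next
  case False
  then show ?thesis by (auto simp: tog_def)
qed

lemma tog_sum:
  assumes "x \<in> set_mset M \<union> S" "finite S"
  shows "sum_mset (fst (tog M S x)) + \<Sum>(snd (tog M S x)) = sum_mset M + \<Sum>S"
proof (cases "x \<in> S")
  case True
  have "\<Sum>S = x + \<Sum>(S - {x})" by (rule sum.remove[OF assms(2) True])
  then show ?thesis using True by (simp add: tog_def)
next
  case False
  then have "x \<in># M" using assms by auto
  then have "sum_mset M = x + sum_mset (M - {#x#})" by (rule sum_mset.remove)
  then show ?thesis using False assms(2) by (simp add: tog_def)
qed

lemma tog_sub: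
  assumes "x \<in> set_mset M \<union> S" "set_mset M \<subseteq> I" "S \<subseteq> I" "finite S"
  shows "set_mset (fst (tog M S x)) \<subseteq> I" "snd (tog M S x) \<subseteq> I" "finite (snd (tog M S x))"
proof -
  show "set_mset (fst (tog M S x)) \<subseteq> I" "snd (tog M S x) \<subseteq> I"
    using tog_union[OF assms(1)] assms(2,3) by blast+
  show "finite (snd (tog M S x))" by (cases "x \<in> S") (simp_all add: tog_def assms(4))
qed

lemma HG_one:
  assumes "0 \<notin> I"
  shows "Hs I * Gs I = 1"
proof -
  let ?XH = "{M. set_mset M \<subseteq> I}" and ?XG = "{S. finite S \<and> S \<subseteq> I}"
  have "Hs I * Gs I = cnt (?XH \<times> ?XG) (\<lambda>(x,y). sum_mset x + \<Sum>y)"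
    unfolding Hs_def Gs_def by (rule cnt_mult[OF finfib_Hs[OF assms] finfib_Gs])
  also have "\<dots> = cnt {()} (\<lambda>_. 0)"
  proof (rule cnt_parity)
    fix n
    let ?F = "{p \<in> ?XH \<times> ?XG. (\<lambda>(x,y). sum_mset x + \<Sum>y) p = n}"
    have ff: "finfib (?XH \<times> ?XG) (\<lambda>(x,y). sum_mset x + \<Sum>y)"
      by (rule finfib_mult[OF finfib_Hs[OF assms] finfib_Gs])
    have fin: "finite ?F" using ff unfolding finfib_def by (rule spec)
    show "even (card ?F) = even (card {x \<in> {()}. (\<lambda>_. 0) x = n})"
    proof (cases "n = 0")
      case True
      have "?F = {({#}, {})}"
      proof
        show "?F \<subseteq> {({#}, {})}"
        proof
          fix p assume p: "p \<in> ?F"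
          obtain M S where MS: "p = (M, S)" by (cases p)
          have h: "set_mset M \<subseteq> I" "finite S" "S \<subseteq> I" "sum_mset M + \<Sum>S = 0"
            using p True unfolding MS by auto
          have "M = {#}"
          proof (rule ccontr)
            assume "M \<noteq> {#}"
            then obtain x where "x \<in># M" by (meson multiset_nonemptyE)
            then have "x \<le> sum_mset M" using sum_mset.remove[of x M] by simp
            moreover have "x > 0" using \<open>x \<in># M\<close> h(1) assms by (metis gr0I in_mono)
            ultimately show False using h(4) by simp
          qed
          moreover have "S = {}"
          proof -
            have "\<Sum>S = 0" using h(4) by simp
            then have "\<forall>x\<in>S. x = 0" using h(2) by simp
            show "S = {}"
            proof (rule equals0I)
              fix x assume x: "x \<in> S"
              have "x = 0" by (rule bspec[OF \<open>\<forall>x\<in>S. x = 0\<close> x])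
              moreover have "x \<in> I" using x h(3) by (rule subsetD[rotated])
              ultimately show False using assms by simp
            qed
          qed
          ultimately show "p \<in> {({#}, {})}" using MS by simp
        qed
        show "{({#}, {})} \<subseteq> ?F" using True by simp
      qed
      then show ?thesis using True by simp
    next
      case False
      have "even (card ?F) = even (card {p\<in>?F. sig p = p})"
      proof (rule involution_parity[OF fin])
        fix p assume p: "p \<in> ?F"
        obtain M S where MS: "p = (M, S)" by (cases p)
        have h: "set_mset M \<subseteq> I" "finite S" "S \<subseteq> I" "sum_mset M + \<Sum>S = n"
          using p unfolding MS by auto
        have ne: "set_mset M \<union> S \<noteq> {}" using h(4) False by auto
        have fU: "finite (set_mset M \<union> S)" using h(2) by simp
        let ?x = "Min (set_mset M \<union> S)"
        have xin: "?x \<in> set_mset M \<union> S" using Min_in[OF fU ne] .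
        have sp: "sig p = tog M S ?x" unfolding sig_def MS by simp
        show "sig p \<in> ?F"
          using tog_sub[OF xin h(1,3,2)] tog_sum[OF xin h(2)] h(4) unfolding sp
          by (cases "tog M S ?x") auto
        have u: "set_mset (fst (sig p)) \<union> snd (sig p) = set_mset M \<union> S"
          unfolding sp by (rule tog_union[OF xin])
        have "sig (sig p) = tog (fst (sig p)) (snd (sig p)) ?x"
          by (simp only: sig_def[of "sig p"] u)
        also have "\<dots> = p" unfolding sp using tog_tog[OF xin] MS by simp
        finally show "sig (sig p) = p" .
      qed
      also have "{p\<in>?F. sig p = p} = {}"
      proof -
        have "sig p \<noteq> p" if p: "p \<in> ?F" for p
        proof -
          obtain M S where MS: "p = (M, S)" by (cases p)
          have h: "finite S" "sum_mset M + \<Sum>S = n"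
            using p unfolding MS by auto
          have ne: "set_mset M \<union> S \<noteq> {}" using h(2) False by auto
          have fU: "finite (set_mset M \<union> S)" using h(1) by simp
          have xin: "Min (set_mset M \<union> S) \<in> set_mset M \<union> S" using Min_in[OF fU ne] .
          show ?thesis using tog_ne[OF xin] unfolding sig_def MS by simp
        qed
        then show ?thesis by blast
      qed
      finally show ?thesis using False by simp
    qed
  qed
  also have "\<dots> = 1" by (rule cnt_one)
  finally show ?thesis .
qed

definition Yset :: "(nat set \<times> nat set) set" where
  "Yset = {P. finite (fst P) \<and> finite (snd P) \<and> 0 \<notin> fst P}"

definition wt :: "nat set \<times> nat set \<Rightarrow> nat" where
  "wt P = \<Sum>(fst P) + \<Sum>(snd P)"

definition ch :: "nat set \<times> nat set \<Rightarrow> int" where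
  "ch P = int (card (fst P)) - int (card (snd P))"

definition sg :: "nat set \<times> nat set \<Rightarrow> nat set \<times> nat set" where
  "sg P = ((\<lambda>x. x - 1) ` (fst P - {1}), Suc ` snd P \<union> (if 1 \<in> fst P then {} else {0}))"

definition tg :: "nat set \<times> nat set \<Rightarrow> nat set \<times> nat set" where
  "tg P = (Suc ` fst P \<union> (if 0 \<in> snd P then {} else {1}), (\<lambda>x. x - 1) ` (snd P - {0}))"

lemma inj_pred: "0 \<notin> A \<Longrightarrow> inj_on (\<lambda>x::nat. x - 1) A"
  unfolding inj_on_def
proof (intro ballI impI)
  fix x y assume a: "0 \<notin> A" and xy: "x \<in> A" "y \<in> A" "x - 1 = y - 1"
  have "x \<noteq> 0" using xy(1) a by (cases "x = 0") simp_all
  moreover have "y \<noteq> 0" using xy(2) a by (cases "y = 0") simp_all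
  ultimately show "x = y" using xy(3) by arith
qed

lemma card_pred_img: "0 \<notin> A \<Longrightarrow> card ((\<lambda>x::nat. x - 1) ` A) = card A"
  by (rule card_image[OF inj_pred])

lemma sum_pred_img:
  assumes "finite A" "0 \<notin> A"
  shows "int (\<Sum>((\<lambda>x::nat. x - 1) ` A)) = int (\<Sum>A) - int (card A)"
proof -
  have "\<Sum>((\<lambda>x::nat. x - 1) ` A) = (\<Sum>x\<in>A. x - 1)"
    using sum.reindex[OF inj_pred[OF assms(2)], of id] by simp
  moreover have "int (x - 1) = int x - 1" if "x \<in> A" for x
  proof -
    have "x \<noteq> 0" using that assms(2) by (cases "x = 0") simp_all
    then show ?thesis by (simp add: of_nat_diff)
  qed
  ultimately have "int (\<Sum>((\<lambda>x::nat. x - 1) ` A)) = (\<Sum>x\<in>A. int x - 1)"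
    by (simp add: of_nat_sum)
  also have "\<dots> = int (\<Sum>A) - int (card A)"
    by (simp add: sum_subtractf)
  finally show ?thesis .
qed

lemma sum_Suc_img: "finite B \<Longrightarrow> \<Sum>(Suc ` B) = \<Sum>B + card B"
proof -
  have "\<Sum>(Suc ` B) = (\<Sum>x\<in>B. Suc x)" by (simp add: sum.reindex)
  also have "\<dots> = \<Sum>B + card B" using sum_Suc[of "\<lambda>x. x" B] by simp
  finally show ?thesis .
qed

lemma Suc_pred_img: "0 \<notin> A \<Longrightarrow> Suc ` ((\<lambda>x::nat. x - 1) ` A) = A"
proof -
  assume a: "0 \<notin> A"
  have "Suc ` ((\<lambda>x::nat. x - 1) ` A) = (\<lambda>x. Suc (x - 1)) ` A" by (simp add: image_image)
  also have "\<dots> = (\<lambda>x. x) ` A"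
  proof (rule image_cong)
    fix x assume "x \<in> A"
    then have "x \<noteq> 0" using a by (cases "x = 0") simp_all
    then show "Suc (x - 1) = x" by simp
  qed simp
  finally show ?thesis by simp
qed

lemma pred_Suc_img: "(\<lambda>x::nat. x - 1) ` (Suc ` B) = B"
  by (simp add: image_image)

lemma sg_props:
  assumes "P \<in> Yset"
  shows "sg P \<in> Yset" "ch (sg P) = ch P - 1" "int (wt (sg P)) = int (wt P) - ch P"
    "tg (sg P) = P"
proof -
  obtain A B where P: "P = (A, B)" by (cases P)
  have fA: "finite A" and fB: "finite B" and A0: "0 \<notin> A" using assms unfolding P Yset_def by auto
  let ?A' = "(\<lambda>x::nat. x - 1) ` (A - {1})"
  let ?B' = "Suc ` B \<union> (if 1 \<in> A then {} else {0})"
  have sgP: "sg (A, B) = (?A', ?B')" unfolding sg_def by simp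
  have A10: "0 \<notin> A - {1}" using A0 by simp
  have A'0: "0 \<notin> ?A'"
  proof
    assume "0 \<in> ?A'"
    then obtain x where x: "0 = x - 1" "x \<in> A - {1}" by (rule imageE)
    have "x \<noteq> 0" using x(2) A0 by (cases "x = 0") simp_all
    moreover have "x \<noteq> 1" using x(2) by simp
    ultimately show False using x(1) by arith
  qed
  show "sg P \<in> Yset" unfolding P sgP Yset_def using fA fB A'0 by simp
  have cA': "card ?A' = card (A - {1})" by (rule card_pred_img[OF A10])
  have sA': "int (\<Sum>?A') = int (\<Sum>(A - {1})) - int (card (A - {1}))"
    by (rule sum_pred_img) (use fA A10 in auto)
  have S0: "0 \<notin> Suc ` B" by auto
  have cB': "card ?B' = card B + (if 1 \<in> A then 0 else 1)"
    using fB S0 by (simp add: card_image)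
  have sB': "\<Sum>?B' = \<Sum>B + card B"
    using fB S0 by (simp add: sum_Suc_img)
  show "ch (sg P) = ch P - 1"
  proof (cases "1 \<in> A")
    case True
    have "card (A - {1}) = card A - 1" using True fA by simp
    moreover have "card A \<ge> 1" using True fA by (metis card_0_eq empty_iff less_one not_le)
    ultimately show ?thesis using cA' cB' True unfolding P ch_def sgP by simp
  next
    case False
    then show ?thesis using cA' cB' unfolding P ch_def sgP by simp
  qed
  show "int (wt (sg P)) = int (wt P) - ch P"
  proof (cases "1 \<in> A")
    case True
    have c1: "card (A - {1}) = card A - 1" using True fA by simp
    have c2: "card A \<ge> 1" using True fA by (metis card_0_eq empty_iff less_one not_le)
    have s1: "\<Sum>A = 1 + \<Sum>(A - {1})" using sum.remove[OF fA True, of id] by simp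
    show ?thesis using sA' sB' c1 c2 s1 unfolding P wt_def ch_def sgP by simp
  next
    case False
    then have "A - {1} = A" by simp
    then show ?thesis using sA' sB' unfolding P wt_def ch_def sgP by simp
  qed
  have e1: "0 \<in> ?B' \<longleftrightarrow> 1 \<notin> A" using S0 by auto
  have e2: "Suc ` ?A' = A - {1}" by (rule Suc_pred_img[OF A10])
  have "fst (tg (sg P)) = A"
  proof (cases "1 \<in> A")
    case True
    then show ?thesis unfolding P sgP tg_def using e1 e2 by auto
  next
    case False
    then show ?thesis unfolding P sgP tg_def using e1 e2 by auto
  qed
  moreover have "snd (tg (sg P)) = B"
  proof -
    have "?B' - {0} = Suc ` B" by auto
    then show ?thesis unfolding P sgP tg_def by (simp add: image_image)
  qed
  ultimately show "tg (sg P) = P" unfolding P by (metis prod.collapse)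
qed

lemma tg_props:
  assumes "P \<in> Yset"
  shows "tg P \<in> Yset" "ch (tg P) = ch P + 1" "int (wt (tg P)) = int (wt P) + ch P + 1"
    "sg (tg P) = P"
proof -
  obtain A B where P: "P = (A, B)" by (cases P)
  have fA: "finite A" and fB: "finite B" and A0: "0 \<notin> A" using assms unfolding P Yset_def by auto
  let ?A' = "Suc ` A \<union> (if 0 \<in> B then {} else {1})"
  let ?B' = "(\<lambda>x::nat. x - 1) ` (B - {0})"
  have tgP: "tg (A, B) = (?A', ?B')" unfolding tg_def by simp
  have B00: "0 \<notin> B - {0}" by simp
  show "tg P \<in> Yset" unfolding P tgP Yset_def using fA fB by auto
  have one: "1 \<notin> Suc ` A" using A0 by auto
  have cA': "card ?A' = card A + (if 0 \<in> B then 0 else 1)"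
    using fA one by (simp add: card_image)
  have sA': "\<Sum>?A' = \<Sum>A + card A + (if 0 \<in> B then 0 else 1)"
    using fA one by (simp add: sum_Suc_img)
  have cB': "card ?B' = card (B - {0})" by (rule card_pred_img[OF B00])
  have sB': "int (\<Sum>?B') = int (\<Sum>(B - {0})) - int (card (B - {0}))"
    by (rule sum_pred_img) (use fB in auto)
  have sB0: "\<Sum>(B - {0}) = \<Sum>B"
    using fB by (cases "0 \<in> B") (simp_all add: sum.remove)
  show "ch (tg P) = ch P + 1"
  proof (cases "0 \<in> B")
    case True
    have "card (B - {0}) = card B - 1" using True fB by simp
    moreover have "card B \<ge> 1" using True fB by (metis card_0_eq empty_iff less_one not_le)
    ultimately show ?thesis using cA' cB' True unfolding P ch_def tgP by simp
  next
    case False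
    then show ?thesis using cA' cB' unfolding P ch_def tgP by simp
  qed
  show "int (wt (tg P)) = int (wt P) + ch P + 1"
  proof (cases "0 \<in> B")
    case True
    have c1: "card (B - {0}) = card B - 1" using True fB by simp
    have c2: "card B \<ge> 1" using True fB by (metis card_0_eq empty_iff less_one not_le)
    show ?thesis using sA' sB' sB0 c1 c2 True unfolding P wt_def ch_def tgP by simp
  next
    case False
    then have "B - {0} = B" by simp
    then show ?thesis using sA' sB' False unfolding P wt_def ch_def tgP by simp
  qed
  have e1: "1 \<in> ?A' \<longleftrightarrow> 0 \<notin> B" using one by auto
  have "fst (sg (tg P)) = A"
  proof -
    have "?A' - {1} = Suc ` A" using one by auto
    then show ?thesis unfolding P tgP sg_def by (simp add: image_image)
  qed
  moreover have "snd (sg (tg P)) = B"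
  proof -
    have e2: "Suc ` ?B' = B - {0}" by (rule Suc_pred_img[OF B00])
    show ?thesis
    proof (cases "0 \<in> B")
      case True
      then show ?thesis unfolding P tgP sg_def using e1 e2 by auto
    next
      case False
      then show ?thesis unfolding P tgP sg_def using e1 e2 by auto
    qed
  qed
  ultimately show "sg (tg P) = P" unfolding P by (metis prod.collapse)
qed

lemma sg_iter:
  assumes "P \<in> Yset"
  shows "(sg ^^ j) P \<in> Yset \<and> ch ((sg ^^ j) P) = ch P - int j \<and>
    2 * int (wt ((sg ^^ j) P)) = 2 * int (wt P) - 2 * int j * ch P + int j * (int j - 1)"
proof (induction j)
  case 0
  show ?case using assms by simp
next
  case (Suc j)
  let ?Q = "(sg ^^ j) P"
  have Q: "?Q \<in> Yset" "ch ?Q = ch P - int j"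
    "2 * int (wt ?Q) = 2 * int (wt P) - 2 * int j * ch P + int j * (int j - 1)"
    using Suc by auto
  have e: "(sg ^^ Suc j) P = sg ?Q" by simp
  have w: "int (wt (sg ?Q)) = int (wt ?Q) - ch ?Q" by (rule sg_props(3)[OF Q(1)])
  have "2 * int (wt (sg ?Q)) = 2 * int (wt P) - 2 * int (Suc j) * ch P + int (Suc j) * (int (Suc j) - 1)"
    using w Q(2,3) by (simp add: algebra_simps)
  then show ?case unfolding e using sg_props(1,2)[OF Q(1)] Q(2) by simp
qed

lemma tg_iter:
  assumes "P \<in> Yset"
  shows "(tg ^^ j) P \<in> Yset \<and> ch ((tg ^^ j) P) = ch P + int j \<and>
    2 * int (wt ((tg ^^ j) P)) = 2 * int (wt P) + 2 * int j * ch P + int j * (int j + 1)"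
proof (induction j)
  case 0
  show ?case using assms by simp
next
  case (Suc j)
  let ?Q = "(tg ^^ j) P"
  have Q: "?Q \<in> Yset" "ch ?Q = ch P + int j"
    "2 * int (wt ?Q) = 2 * int (wt P) + 2 * int j * ch P + int j * (int j + 1)"
    using Suc by auto
  have e: "(tg ^^ Suc j) P = tg ?Q" by simp
  have w: "int (wt (tg ?Q)) = int (wt ?Q) + ch ?Q + 1" by (rule tg_props(3)[OF Q(1)])
  have "2 * int (wt (tg ?Q)) = 2 * int (wt P) + 2 * int (Suc j) * ch P + int (Suc j) * (int (Suc j) + 1)"
    using w Q(2,3) by (simp add: algebra_simps)
  then show ?case unfolding e using tg_props(1,2)[OF Q(1)] Q(2) by simp
qed

lemma tg_sg_iter: "P \<in> Yset \<Longrightarrow> (tg ^^ j) ((sg ^^ j) P) = P"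
proof (induction j arbitrary: P)
  case 0
  then show ?case by simp
next
  case (Suc j)
  have a: "(sg ^^ Suc j) P = sg ((sg ^^ j) P)" by simp
  have b: "(tg ^^ Suc j) x = (tg ^^ j) (tg x)" for x by (simp only: funpow_Suc_right comp_def)
  have "(tg ^^ Suc j) ((sg ^^ Suc j) P) = (tg ^^ j) (tg (sg ((sg ^^ j) P)))"
    unfolding a b ..
  also have "tg (sg ((sg ^^ j) P)) = (sg ^^ j) P"
    using sg_props(4) sg_iter[OF Suc.prems] by blast
  finally show ?case using Suc by simp
qed

lemma sg_tg_iter: "P \<in> Yset \<Longrightarrow> (sg ^^ j) ((tg ^^ j) P) = P"
proof (induction j arbitrary: P)
  case 0
  then show ?case by simp
next
  case (Suc j)
  have a: "(tg ^^ Suc j) P = tg ((tg ^^ j) P)" by simp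
  have b: "(sg ^^ Suc j) x = (sg ^^ j) (sg x)" for x by (simp only: funpow_Suc_right comp_def)
  have "(sg ^^ Suc j) ((tg ^^ Suc j) P) = (sg ^^ j) (sg (tg ((tg ^^ j) P)))"
    unfolding a b ..
  also have "sg (tg ((tg ^^ j) P)) = (tg ^^ j) P"
    using tg_props(4) tg_iter[OF Suc.prems] by blast
  finally show ?case using Suc by simp
qed

definition nrm :: "nat set \<times> nat set \<Rightarrow> nat set \<times> nat set" where
  "nrm P = (if ch P \<ge> 0 then (sg ^^ nat (ch P)) P else (tg ^^ nat (- ch P)) P)"

definition unnrm :: "int \<times> (nat set \<times> nat set) \<Rightarrow> nat set \<times> nat set" where
  "unnrm kQ = (if fst kQ \<ge> 0 then (tg ^^ nat (fst kQ)) (snd kQ) else (sg ^^ nat (- fst kQ)) (snd kQ))"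

definition Y0 :: "(nat set \<times> nat set) set" where
  "Y0 = {P \<in> Yset. ch P = 0}"

lemma nrm_props:
  assumes "P \<in> Yset"
  shows "nrm P \<in> Y0" "2 * int (wt (nrm P)) = 2 * int (wt P) - ch P * (ch P + 1)"
    "unnrm (ch P, nrm P) = P"
proof -
  show "nrm P \<in> Y0"
  proof (cases "ch P \<ge> 0")
    case True
    then show ?thesis using sg_iter[OF assms, of "nat (ch P)"] unfolding nrm_def Y0_def by simp
  next
    case False
    then show ?thesis using tg_iter[OF assms, of "nat (- ch P)"] unfolding nrm_def Y0_def by simp
  qed
  show "2 * int (wt (nrm P)) = 2 * int (wt P) - ch P * (ch P + 1)"
  proof (cases "ch P \<ge> 0")
    case True
    then have "2 * int (wt (nrm P)) = 2 * int (wt P) - 2 * ch P * ch P + ch P * (ch P - 1)"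
      using sg_iter[OF assms, of "nat (ch P)"] unfolding nrm_def by simp
    then show ?thesis by (simp add: algebra_simps)
  next
    case False
    then have "2 * int (wt (nrm P)) = 2 * int (wt P) + 2 * (- ch P) * ch P + (- ch P) * (- ch P + 1)"
      using tg_iter[OF assms, of "nat (- ch P)"] unfolding nrm_def by simp
    then show ?thesis by (simp add: algebra_simps)
  qed
  show "unnrm (ch P, nrm P) = P"
  proof (cases "ch P \<ge> 0")
    case True
    then show ?thesis unfolding unnrm_def nrm_def using tg_sg_iter[OF assms] by simp
  next
    case False
    then show ?thesis unfolding unnrm_def nrm_def using sg_tg_iter[OF assms] by simp
  qed
qed

lemma unnrm_props:
  assumes "Q \<in> Y0"
  shows "unnrm (k, Q) \<in> Yset" "ch (unnrm (k, Q)) = k" "nrm (unnrm (k, Q)) = Q"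
proof -
  have Q: "Q \<in> Yset" "ch Q = 0" using assms unfolding Y0_def by auto
  show "unnrm (k, Q) \<in> Yset"
  proof (cases "k \<ge> 0")
    case True
    then show ?thesis using tg_iter[OF Q(1), of "nat k"] unfolding unnrm_def by simp
  next
    case False
    then show ?thesis using sg_iter[OF Q(1), of "nat (- k)"] unfolding unnrm_def by simp
  qed
  show c: "ch (unnrm (k, Q)) = k"
  proof (cases "k \<ge> 0")
    case True
    then show ?thesis using tg_iter[OF Q(1), of "nat k"] Q(2) unfolding unnrm_def by simp
  next
    case False
    then show ?thesis using sg_iter[OF Q(1), of "nat (- k)"] Q(2) unfolding unnrm_def by simp
  qed
  show "nrm (unnrm (k, Q)) = Q"
  proof (cases "k \<ge> 0")
    case True
    then have "nrm (unnrm (k, Q)) = (sg ^^ nat k) ((tg ^^ nat k) Q)"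
      using c unfolding nrm_def by (simp add: unnrm_def)
    then show ?thesis using sg_tg_iter[OF Q(1)] by simp
  next
    case False
    then have "nrm (unnrm (k, Q)) = (tg ^^ nat (- k)) ((sg ^^ nat (- k)) Q)"
      using c unfolding nrm_def by (simp add: unnrm_def)
    then show ?thesis using tg_sg_iter[OF Q(1)] by simp
  qed
qed

lemma nrm_bij: "bij_betw (\<lambda>P. (ch P, nrm P)) Yset (UNIV \<times> Y0)"
proof (rule bij_betw_byWitness[where f' = unnrm])
  show "\<forall>a\<in>Yset. unnrm (ch a, nrm a) = a" using nrm_props(3) by blast
  show "\<forall>a'\<in>UNIV \<times> Y0. (ch (unnrm a'), nrm (unnrm a')) = a'"
    using unnrm_props(2,3) by auto
  show "(\<lambda>P. (ch P, nrm P)) ` Yset \<subseteq> UNIV \<times> Y0" using nrm_props(1) by auto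
  show "unnrm ` (UNIV \<times> Y0) \<subseteq> Yset" using unnrm_props(1) by auto
qed

definition Tri :: "int \<Rightarrow> int" where "Tri k = k * (k + 1) div 2"

lemma Tri2: "2 * Tri k = k * (k + 1)"
proof -
  have "even (k * (k + 1))" by simp
  then show ?thesis unfolding Tri_def by simp
qed

lemma tri_bound:
  fixes c a k :: int
  assumes "c \<ge> 1" "a \<le> -1" "c + a \<ge> 1"
  shows "\<bar>k\<bar> \<le> c * Tri k + a * k"
proof -
  have e: "2 * (c * Tri k + a * k) = c * (k * (k + 1)) + 2 * a * k"
    using Tri2[of k] by (simp add: algebra_simps)
  show ?thesis
  proof (cases "k \<ge> 1")
    case True
    have "k * (k + 1) \<ge> 2 * k"
    proof -
      have "k * (k - 1) \<ge> 0" using True by simp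
      then show ?thesis by (simp add: algebra_simps)
    qed
    then have "c * (k * (k + 1)) \<ge> c * (2 * k)" using assms(1) by (intro mult_left_mono) auto
    moreover have "(c + a) * k \<ge> 1 * k" using assms(3) True by (intro mult_right_mono) auto
    ultimately have "2 * (c * Tri k + a * k) \<ge> 2 * k" using e by (simp add: algebra_simps)
    then show ?thesis using True by simp
  next
    case False
    then have k: "k \<le> 0" by simp
    have "k * (k + 1) \<ge> 0"
    proof (cases "k = 0")
      case True then show ?thesis by simp
    next
      case False
      then have "k \<le> -1" using k by simp
      then have "- k \<ge> 0" "- (k + 1) \<ge> 0" by simp_all
      then have "(- k) * (- (k + 1)) \<ge> 0" by (rule mult_nonneg_nonneg)
      moreover have "(- k) * (- (k + 1)) = k * (k + 1)" by (simp add: algebra_simps)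
      ultimately show ?thesis by linarith
    qed
    then have "c * (k * (k + 1)) \<ge> 0" using assms(1) by simp
    moreover have "(- a) * (- k) \<ge> 1 * (- k)" using assms(2) k by (intro mult_right_mono) auto
    ultimately have "2 * (c * Tri k + a * k) \<ge> 2 * (- k)" using e by (simp add: algebra_simps)
    then show ?thesis using k by simp
  qed
qed

definition theta :: "int \<Rightarrow> int \<Rightarrow> bit fps" where
  "theta c a = cnt UNIV (\<lambda>k::int. nat (c * Tri k + a * k))"

lemma finfib_theta:
  assumes "c \<ge> 1" "a \<le> -1" "c + a \<ge> 1"
  shows "finfib UNIV (\<lambda>k::int. nat (c * Tri k + a * k))"
  unfolding finfib_def
proof
  fix n
  have "{k \<in> UNIV. nat (c * Tri k + a * k) = n} \<subseteq> {- int n..int n}"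
  proof
    fix k assume "k \<in> {k \<in> UNIV. nat (c * Tri k + a * k) = n}"
    then have "nat (c * Tri k + a * k) = n" by simp
    moreover have "\<bar>k\<bar> \<le> c * Tri k + a * k" by (rule tri_bound[OF assms])
    ultimately show "k \<in> {- int n..int n}" by auto
  qed
  then show "finite {k \<in> UNIV. nat (c * Tri k + a * k) = n}" by (rule finite_subset) simp
qed

lemma finfib_Y0: "finfib Y0 wt"
  unfolding finfib_def
proof
  fix n
  have "{P \<in> Y0. wt P = n} \<subseteq> Pow {..n} \<times> Pow {..n}"
  proof
    fix P assume P: "P \<in> {P \<in> Y0. wt P = n}"
    obtain A B where AB: "P = (A, B)" by (cases P)
    have fin: "finite A" "finite B" and s: "\<Sum>A + \<Sum>B = n"
      using P unfolding AB Y0_def Yset_def wt_def by auto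
    have "A \<subseteq> {..n}"
    proof
      fix x assume "x \<in> A"
      then have "x \<le> \<Sum>A" using member_le_sum[of x A id] fin(1) by simp
      then show "x \<in> {..n}" using s by simp
    qed
    moreover have "B \<subseteq> {..n}"
    proof
      fix x assume "x \<in> B"
      then have "x \<le> \<Sum>B" using member_le_sum[of x B id] fin(2) by simp
      then show "x \<in> {..n}" using s by simp
    qed
    ultimately show "P \<in> Pow {..n} \<times> Pow {..n}" using AB by simp
  qed
  then show "finite {P \<in> Y0. wt P = n}" by (rule finite_subset) simp
qed

definition UA :: "int \<Rightarrow> int \<Rightarrow> nat set" where
  "UA c a = {m. \<exists>n::nat. n \<ge> 1 \<and> int m = c * int n + a}"

definition UB :: "int \<Rightarrow> int \<Rightarrow> nat set" where
  "UB c a = {m. \<exists>n::nat. int m = c * int n - a}"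

lemma JTP:
  fixes c a :: int
  assumes c1: "c \<ge> 1" and a1: "a \<le> -1" and ca: "c + a \<ge> 1"
  shows "Gs (UA c a) * Gs (UB c a) = theta c a * cnt Y0 (\<lambda>P. nat c * wt P)"
proof -
  define fA where "fA = (\<lambda>n::nat. nat (c * int n + a))"
  define fB where "fB = (\<lambda>n::nat. nat (c * int n - a))"
  define gA where "gA = (\<lambda>m::nat. nat ((int m - a) div c))"
  define gB where "gB = (\<lambda>m::nat. nat ((int m + a) div c))"
  have c0: "c \<noteq> 0" using c1 by simp
  have A1: "int (fA n) = c * int n + a" if "n \<ge> 1" for n
  proof -
    have "c * int n \<ge> c * 1" using that c1 by (intro mult_left_mono) auto
    then show ?thesis unfolding fA_def using ca by simp
  qed
  have A2: "gA (fA n) = n" if "n \<ge> 1" for n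
  proof -
    have "(int (fA n) - a) div c = int n" using A1[OF that] c0 by simp
    then show ?thesis unfolding gA_def by simp
  qed
  have A3: "fA n \<in> UA c a" if "n \<ge> 1" for n
    unfolding UA_def using A1[OF that] that by auto
  have A4: "gA m \<ge> 1 \<and> fA (gA m) = m" if "m \<in> UA c a" for m
  proof -
    have "\<exists>n::nat. n \<ge> 1 \<and> int m = c * int n + a" using that unfolding UA_def by simp
    then obtain n where n: "n \<ge> 1" "int m = c * int n + a" by (elim exE conjE)
    have "m = fA n" using A1[OF n(1)] n(2) by simp
    then show ?thesis using A2[OF n(1)] n(1) by simp
  qed
  have B1: "int (fB n) = c * int n - a" for n
  proof -
    have "c * int n \<ge> 0" using c1 by simp
    then show ?thesis unfolding fB_def using a1 by simp
  qed
  have B2: "gB (fB n) = n" for n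
  proof -
    have "(int (fB n) + a) div c = int n" using B1[of n] c0 by simp
    then show ?thesis unfolding gB_def by simp
  qed
  have B3: "fB n \<in> UB c a" for n
    unfolding UB_def using B1[of n] by auto
  have B4: "fB (gB m) = m" if "m \<in> UB c a" for m
  proof -
    have "\<exists>n::nat. int m = c * int n - a" using that unfolding UB_def by simp
    then obtain n where n: "int m = c * int n - a" by (elim exE)
    have "m = fB n" using B1[of n] n by simp
    then show ?thesis using B2 by simp
  qed
  let ?XA = "{S. finite S \<and> S \<subseteq> UA c a}" and ?XB = "{S. finite S \<and> S \<subseteq> UB c a}"
  define h where "h = (\<lambda>P::nat set \<times> nat set. (fA ` fst P, fB ` snd P))"
  define h' where "h' = (\<lambda>P::nat set \<times> nat set. (gA ` fst P, gB ` snd P))"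
  have bij: "bij_betw h Yset (?XA \<times> ?XB)"
  proof (rule bij_betw_byWitness[where f' = h'])
    show "\<forall>P\<in>Yset. h' (h P) = P"
    proof
      fix P assume P: "P \<in> Yset"
      obtain A B where AB: "P = (A, B)" by (cases P)
      have A0: "0 \<notin> A" using P unfolding AB Yset_def by simp
      have "gA ` fA ` A = A"
      proof -
        have "gA ` fA ` A = (\<lambda>n. gA (fA n)) ` A" by (simp add: image_image)
        also have "\<dots> = (\<lambda>n. n) ` A"
        proof (rule image_cong)
          fix n assume "n \<in> A"
          then have "n \<ge> 1" using A0 by (cases "n = 0") simp_all
          then show "gA (fA n) = n" by (rule A2)
        qed simp
        finally show ?thesis by simp
      qed
      moreover have "gB ` fB ` B = B" using B2 by (simp add: image_image)
      ultimately show "h' (h P) = P" unfolding h_def h'_def AB by simp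
    qed
    show "\<forall>S\<in>?XA \<times> ?XB. h (h' S) = S"
    proof
      fix S assume S: "S \<in> ?XA \<times> ?XB"
      obtain S1 S2 where SS: "S = (S1, S2)" by (cases S)
      have s1: "S1 \<subseteq> UA c a" and s2: "S2 \<subseteq> UB c a" using S unfolding SS by auto
      have "fA ` gA ` S1 = S1"
      proof -
        have "fA ` gA ` S1 = (\<lambda>n. fA (gA n)) ` S1" by (simp add: image_image)
        also have "\<dots> = (\<lambda>n. n) ` S1"
        proof (rule image_cong)
          fix n assume "n \<in> S1"
          then show "fA (gA n) = n" using A4 s1 by blast
        qed simp
        finally show ?thesis by simp
      qed
      moreover have "fB ` gB ` S2 = S2"
      proof -
        have "fB ` gB ` S2 = (\<lambda>n. fB (gB n)) ` S2" by (simp add: image_image)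
        also have "\<dots> = (\<lambda>n. n) ` S2"
        proof (rule image_cong)
          fix n assume "n \<in> S2"
          then show "fB (gB n) = n" using B4 s2 by blast
        qed simp
        finally show ?thesis by simp
      qed
      ultimately show "h (h' S) = S" unfolding h_def h'_def SS by simp
    qed
    show "h ` Yset \<subseteq> ?XA \<times> ?XB"
    proof
      fix S assume "S \<in> h ` Yset"
      then obtain P where P: "P \<in> Yset" "S = h P" by auto
      obtain A B where AB: "P = (A, B)" by (cases P)
      have fin: "finite A" "finite B" and A0: "0 \<notin> A" using P(1) unfolding AB Yset_def by auto
      have "fA ` A \<subseteq> UA c a"
      proof
        fix m assume "m \<in> fA ` A"
        then obtain n where n: "n \<in> A" "m = fA n" by auto
        have "n \<ge> 1" using n(1) A0 by (cases "n = 0") simp_all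
        then show "m \<in> UA c a" using A3 n(2) by simp
      qed
      moreover have "fB ` B \<subseteq> UB c a" using B3 by auto
      ultimately show "S \<in> ?XA \<times> ?XB" using fin unfolding P(2) h_def AB by simp
    qed
    show "h' ` (?XA \<times> ?XB) \<subseteq> Yset"
    proof
      fix P assume "P \<in> h' ` (?XA \<times> ?XB)"
      then obtain S where S: "S \<in> ?XA \<times> ?XB" "P = h' S" by auto
      obtain S1 S2 where SS: "S = (S1, S2)" by (cases S)
      have fin: "finite S1" "finite S2" and s1: "S1 \<subseteq> UA c a" using S(1) unfolding SS by auto
      have "0 \<notin> gA ` S1"
      proof
        assume "0 \<in> gA ` S1"
        then obtain m where m: "0 = gA m" "m \<in> S1" by (rule imageE)
        have "gA m \<ge> 1" using A4 s1 m(2) by blast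
        then show False using m(1) by simp
      qed
      then show "P \<in> Yset" using fin unfolding S(2) SS h'_def Yset_def by simp
    qed
  qed
  have sumh: "(\<lambda>(x,y). \<Sum>x + \<Sum>y) (h P) = nat (c * int (wt P) + a * ch P)" if P: "P \<in> Yset" for P
  proof -
    obtain A B where AB: "P = (A, B)" by (cases P)
    have fin: "finite A" "finite B" and A0: "0 \<notin> A" using P unfolding AB Yset_def by auto
    have A1': "n \<ge> 1" if "n \<in> A" for n using that A0 by (cases "n = 0") simp_all
    have injA: "inj_on fA A" by (rule inj_on_inverseI[where g = gA]) (use A2 A1' in blast)
    have injB: "inj_on fB B" by (rule inj_on_inverseI[where g = gB]) (use B2 in blast)
    have sA: "int (\<Sum>(fA ` A)) = c * int (\<Sum>A) + a * int (card A)"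
    proof -
      have "int (\<Sum>(fA ` A)) = (\<Sum>n\<in>A. int (fA n))"
        by (simp add: sum.reindex[OF injA] of_nat_sum)
      also have "\<dots> = (\<Sum>n\<in>A. c * int n + a)"
      proof (rule sum.cong)
        fix x assume "x \<in> A"
        show "int (fA x) = c * int x + a" by (rule A1[OF A1'[OF \<open>x \<in> A\<close>]])
      qed simp
      also have "\<dots> = c * int (\<Sum>A) + a * int (card A)"
        by (simp add: sum.distrib sum_distrib_left of_nat_sum)
      finally show ?thesis .
    qed
    have sB: "int (\<Sum>(fB ` B)) = c * int (\<Sum>B) - a * int (card B)"
    proof -
      have "int (\<Sum>(fB ` B)) = (\<Sum>n\<in>B. int (fB n))"
        by (simp add: sum.reindex[OF injB] of_nat_sum)
      also have "\<dots> = (\<Sum>n\<in>B. c * int n - a)"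
        by (rule sum.cong) (simp_all add: B1)
      also have "\<dots> = c * int (\<Sum>B) - a * int (card B)"
        by (simp add: sum_subtractf sum_distrib_left of_nat_sum)
      finally show ?thesis .
    qed
    have "int (\<Sum>(fA ` A) + \<Sum>(fB ` B)) = c * int (wt P) + a * ch P"
      using sA sB unfolding AB wt_def ch_def by (simp add: algebra_simps)
    then have "\<Sum>(fA ` A) + \<Sum>(fB ` B) = nat (c * int (wt P) + a * ch P)" by (metis nat_int)
    then show ?thesis unfolding h_def AB by (simp only: prod.case fst_conv snd_conv)
  qed
  have fibY0: "finfib Y0 (\<lambda>P. nat c * wt P)"
    by (rule finfib_scale[OF finfib_Y0]) (use c1 in simp)
  have "Gs (UA c a) * Gs (UB c a) = cnt (?XA \<times> ?XB) (\<lambda>(x,y). \<Sum>x + \<Sum>y)"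
    unfolding Gs_def by (rule cnt_mult[OF finfib_Gs finfib_Gs])
  also have "\<dots> = cnt Yset (\<lambda>P. nat (c * int (wt P) + a * ch P))"
    by (rule sym, rule cnt_bij[OF bij], erule sumh)
  also have "\<dots> = cnt (UNIV \<times> Y0) (\<lambda>(k,Q). nat (c * Tri k + a * k) + nat c * wt Q)"
  proof (rule cnt_bij[OF nrm_bij])
    fix P assume P: "P \<in> Yset"
    let ?k = "ch P"
    have w: "2 * int (wt (nrm P)) = 2 * int (wt P) - ?k * (?k + 1)" by (rule nrm_props(2)[OF P])
    have w2: "int (wt (nrm P)) = int (wt P) - Tri ?k" using w Tri2[of ?k] by simp
    have bnd: "\<bar>?k\<bar> \<le> c * Tri ?k + a * ?k" by (rule tri_bound[OF c1 a1 ca])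
    have nc: "int (nat c) = c" using c1 by simp
    have i1: "int (nat (c * Tri ?k + a * ?k)) = c * Tri ?k + a * ?k" using bnd by simp
    have i2: "int (nat c * wt (nrm P)) = c * (int (wt P) - Tri ?k)"
      by (simp only: of_nat_mult nc w2)
    have "int (nat (c * Tri ?k + a * ?k) + nat c * wt (nrm P)) = c * int (wt P) + a * ?k"
      by (simp only: of_nat_add i1 i2) (simp add: algebra_simps)
    then have fin: "nat (c * Tri ?k + a * ?k) + nat c * wt (nrm P) = nat (c * int (wt P) + a * ch P)"
      by (metis nat_int)
    show "(\<lambda>(k,Q). nat (c * Tri k + a * k) + nat c * wt Q) (ch P, nrm P) = nat (c * int (wt P) + a * ch P)"
      by (simp only: prod.case fin)
  qed
  also have "\<dots> = theta c a * cnt Y0 (\<lambda>P. nat c * wt P)"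
    unfolding theta_def by (rule sym, rule cnt_mult[OF finfib_theta[OF c1 a1 ca] fibY0])
  finally show ?thesis .
qed



definition Pos :: "nat set" where "Pos = {n. 0 < n}"
definition Odd :: "nat set" where "Odd = {n. odd n}"

lemma memPos: "(k::nat) > 0 \<Longrightarrow> m \<in> (*) k ` Pos \<longleftrightarrow> (k dvd m \<and> 0 < m)"
  unfolding Pos_def by (auto simp: image_iff dvd_def)

lemma Gs_nth0:
  assumes "0 \<notin> I"
  shows "Gs I $ 0 = 1"
proof -
  have "{S \<in> {S. finite S \<and> S \<subseteq> I}. \<Sum>S = 0} = {{}}"
  proof
    show "{S \<in> {S. finite S \<and> S \<subseteq> I}. \<Sum>S = 0} \<subseteq> {{}}"
    proof
      fix S assume S: "S \<in> {S \<in> {S. finite S \<and> S \<subseteq> I}. \<Sum>S = 0}"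
      then have fS: "finite S" and sI: "S \<subseteq> I" and s0: "\<Sum>S = 0" by auto
      have "\<forall>x\<in>S. x = 0" using s0 fS by simp
      have "S = {}"
      proof (rule equals0I)
        fix x assume x: "x \<in> S"
        have "x = 0" by (rule bspec[OF \<open>\<forall>x\<in>S. x = 0\<close> x])
        moreover have "x \<in> I" using x sI by (rule subsetD[rotated])
        ultimately show False using assms by simp
      qed
      then show "S \<in> {{}}" by simp
    qed
    show "{{}} \<subseteq> {S \<in> {S. finite S \<and> S \<subseteq> I}. \<Sum>S = 0}" by simp
  qed
  then show ?thesis unfolding Gs_def cnt_nth by simp
qed

lemma Gs_ne0: "0 \<notin> I \<Longrightarrow> Gs I \<noteq> 0"
proof
  assume "0 \<notin> I" "Gs I = 0"
  then have "Gs I $ 0 = 0" by simp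
  then show False using Gs_nth0[OF \<open>0 \<notin> I\<close>] by simp
qed

lemma Gs_img_union:
  assumes "(c::nat) > 0" "A \<inter> B = {}"
  shows "Gs ((*) c ` (A \<union> B)) = Gs ((*) c ` A) * Gs ((*) c ` B)"
proof -
  have inj: "inj ((*) c)" using assms(1) by (auto intro: injI)
  have "(*) c ` A \<inter> (*) c ` B = {}" using assms(2) inj by (simp add: image_Int[symmetric])
  then show ?thesis by (simp add: image_Un Gs_union)
qed

lemma Gs_img2: "Gs ((*) c ` ((*) 2 ` A)) = Gs ((*) c ` A) * Gs ((*) c ` A)"
proof -
  have "(*) c ` ((*) 2 ` A) = (*) 2 ` ((*) c ` A)" by (simp add: image_image mult.left_commute)
  then show ?thesis by (simp add: Gs_double)
qed

lemma img1: "(*) (1::nat) ` A = A" by simp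

lemma Pos_split: "Pos = Odd \<union> (*) 2 ` Pos" "Odd \<inter> (*) 2 ` Pos = {}"
proof -
  show "Pos = Odd \<union> (*) 2 ` Pos"
  proof (rule Set.set_eqI)
    fix m
    show "m \<in> Pos \<longleftrightarrow> m \<in> Odd \<union> (*) 2 ` Pos"
      unfolding Un_iff memPos[of 2, simplified] unfolding Pos_def Odd_def mem_Collect_eq by presburger
  qed
  show "Odd \<inter> (*) 2 ` Pos = {}" unfolding Pos_def Odd_def by auto
qed

lemma Gs_inv:
  assumes "(c::nat) > 0"
  shows "Gs ((*) c ` Odd) * Gs ((*) c ` Pos) = 1"
proof -
  let ?G = "Gs ((*) c ` Pos)" and ?O = "Gs ((*) c ` Odd)"
  have "?G = Gs ((*) c ` (Odd \<union> (*) 2 ` Pos))" using Pos_split(1) by simp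
  also have "\<dots> = ?O * Gs ((*) c ` ((*) 2 ` Pos))" by (rule Gs_img_union[OF assms Pos_split(2)])
  also have "\<dots> = ?O * (?G * ?G)" by (simp only: Gs_img2)
  finally have e: "?G * 1 = ?G * (?O * ?G)" by (simp add: algebra_simps)
  have "0 \<notin> (*) c ` Pos" using memPos[OF assms, of 0] by simp
  then have "?G \<noteq> 0" by (rule Gs_ne0)
  then have "1 = ?O * ?G" using e by simp
  then show ?thesis by simp
qed



abbreviation EE :: "bit fps" where "EE \<equiv> Gs Pos"

lemma E2: "Gs ((*) 2 ` Pos) = EE ^ 2"
  using Gs_double[of Pos] by (simp add: power2_eq_square)

lemma E4: "Gs ((*) 4 ` Pos) = EE ^ 4"
proof -
  have "(*) 4 ` Pos = (*) 2 ` ((*) 2 ` Pos)" by (simp add: image_image)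
  then have "Gs ((*) 4 ` Pos) = Gs ((*) 2 ` Pos) * Gs ((*) 2 ` Pos)" by (simp add: Gs_double)
  then show ?thesis using E2 by (simp add: power_add[symmetric])
qed

lemma E8: "Gs ((*) 8 ` Pos) = EE ^ 8"
proof -
  have "(*) 8 ` Pos = (*) 2 ` ((*) 4 ` Pos)" by (simp add: image_image)
  then have "Gs ((*) 8 ` Pos) = Gs ((*) 4 ` Pos) * Gs ((*) 4 ` Pos)" by (simp add: Gs_double)
  then show ?thesis using E4 by (simp add: power_add[symmetric])
qed

definition I8 :: "nat set" where "I8 = {n. 0 < n \<and> \<not> 8 dvd n}"

lemma Hs_I8: "Hs I8 = EE ^ 7"
proof -
  have split: "Pos = I8 \<union> (*) 8 ` Pos"
  proof (rule Set.set_eqI)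
    fix m
    show "m \<in> Pos \<longleftrightarrow> m \<in> I8 \<union> (*) 8 ` Pos"
      unfolding Un_iff memPos[of 8, simplified] unfolding Pos_def I8_def mem_Collect_eq by presburger
  qed
  have disj: "I8 \<inter> (*) 8 ` Pos = {}"
  proof (rule equals0I)
    fix m assume "m \<in> I8 \<inter> (*) 8 ` Pos"
    then show False unfolding Int_iff memPos[of 8, simplified] unfolding I8_def mem_Collect_eq by presburger
  qed
  have I80: "0 \<notin> I8" unfolding I8_def by simp
  have "EE = Gs I8 * Gs ((*) 8 ` Pos)" using Gs_union[OF disj] split by simp
  then have e: "EE = Gs I8 * EE ^ 8" using E8 by simp
  have "Hs I8 * EE = Hs I8 * (Gs I8 * EE ^ 8)" by (rule arg_cong[OF e])
  also have "\<dots> = (Hs I8 * Gs I8) * EE ^ 8" by (simp add: mult.assoc)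
  also have "\<dots> = EE ^ 8" using HG_one[OF I80] by simp
  also have "\<dots> = EE ^ 7 * EE" by (simp add: power_Suc2[symmetric])
  finally have "Hs I8 * EE = EE ^ 7 * EE" .
  moreover have "EE \<noteq> 0" by (rule Gs_ne0) (simp add: Pos_def)
  ultimately show ?thesis by simp
qed

lemma theta2: "theta 2 (-1) = 1"
proof -
  have v: "nat (2 * Tri k + - 1 * k) = nat (k * k)" for k
    using Tri2[of k] by (simp add: algebra_simps)
  have fin: "finfib UNIV (\<lambda>k::int. nat (2 * Tri k + - 1 * k))"
    by (rule finfib_theta) simp_all
  have "theta 2 (-1) = cnt {()} (\<lambda>_. 0)"
    unfolding theta_def
  proof (rule cnt_parity)
    fix n
    let ?F = "{k \<in> UNIV. nat (2 * Tri k + - 1 * k) = n}"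
    have fF: "finite ?F" using fin unfolding finfib_def by (rule spec)
    have "even (card ?F) = even (card {k\<in>?F. - k = k})"
    proof (rule involution_parity[OF fF])
      fix k assume "k \<in> ?F"
      then show "- k \<in> ?F" using v[of k] v[of "- k"] by simp
      show "- (- k) = k" by simp
    qed
    also have "{k\<in>?F. - k = k} = (if n = 0 then {0} else {})" using v[of 0] by auto
    finally show "even (card ?F) = even (card {x \<in> {()}. (\<lambda>_. 0) x = n})" by simp
  qed
  then show ?thesis using cnt_one by simp
qed

lemma A0_eq:
  assumes "(k::nat) > 0"
  shows "cnt Y0 (\<lambda>P. k * wt P) = Gs ((*) k ` Odd)"
proof -
  let ?X = "{S. finite S \<and> S \<subseteq> Odd}"
  have U2A: "UA 2 (-1) = Odd" unfolding UA_def Odd_def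
  proof (rule Set.set_eqI)
    fix m :: nat
    show "m \<in> {m. \<exists>n::nat. 1 \<le> n \<and> int m = 2 * int n + - 1} \<longleftrightarrow> m \<in> {n. odd n}"
      unfolding mem_Collect_eq by presburger
  qed
  have U2B: "UB 2 (-1) = Odd" unfolding UB_def Odd_def
  proof (rule Set.set_eqI)
    fix m :: nat
    show "m \<in> {m. \<exists>n::nat. int m = 2 * int n - - 1} \<longleftrightarrow> m \<in> {n. odd n}"
      unfolding mem_Collect_eq by presburger
  qed
  have "Gs Odd * Gs Odd = theta 2 (-1) * cnt Y0 (\<lambda>P. nat 2 * wt P)"
    using JTP[of 2 "-1"] U2A U2B by simp
  then have "cnt Y0 (\<lambda>P. 2 * wt P) = Gs ((*) 2 ` Odd)" using theta2 Gs_double[of Odd] by simp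
  also have "\<dots> = cnt ?X (\<lambda>S. 2 * \<Sum>S)" by (rule Gs_scale) simp
  finally have "cnt Y0 wt = cnt ?X (\<lambda>S. \<Sum>S)" by (rule cnt_unscale) simp
  then have "cnt Y0 (\<lambda>P. k * wt P) = cnt ?X (\<lambda>S. k * \<Sum>S)" by (rule cnt_scale[OF _ assms])
  also have "\<dots> = Gs ((*) k ` Odd)" by (rule Gs_scale[symmetric, OF assms])
  finally show ?thesis .
qed

lemma E_theta3: "EE = theta 3 (-1)"
proof -
  have U: "UA 3 (-1) \<union> UB 3 (-1) = {m. 0 < m \<and> \<not> 3 dvd m}" unfolding UA_def UB_def
  proof (rule Set.set_eqI)
    fix m :: nat
    show "m \<in> {m. \<exists>n::nat. 1 \<le> n \<and> int m = 3 * int n + - 1} \<union> {m. \<exists>n::nat. int m = 3 * int n - - 1} \<longleftrightarrow> m \<in> {m. 0 < m \<and> \<not> 3 dvd m}"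
      unfolding mem_Collect_eq Un_iff by presburger
  qed
  have D: "UA 3 (-1) \<inter> UB 3 (-1) = {}" unfolding UA_def UB_def
  proof (rule equals0I)
    fix m :: nat
    assume "m \<in> {m. \<exists>n::nat. 1 \<le> n \<and> int m = 3 * int n + - 1} \<inter> {m. \<exists>n::nat. int m = 3 * int n - - 1}"
    then show False unfolding mem_Collect_eq Int_iff by presburger
  qed
  have split: "Pos = {m. 0 < m \<and> \<not> 3 dvd m} \<union> (*) 3 ` Pos"
  proof (rule Set.set_eqI)
    fix m
    show "m \<in> Pos \<longleftrightarrow> m \<in> {m. 0 < m \<and> \<not> 3 dvd m} \<union> (*) 3 ` Pos"
      unfolding Un_iff memPos[of 3, simplified] unfolding Pos_def mem_Collect_eq by presburger
  qed
  have disj: "{m. 0 < m \<and> \<not> 3 dvd m} \<inter> (*) 3 ` Pos = {}"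
  proof (rule equals0I)
    fix m assume "m \<in> {m. 0 < m \<and> \<not> 3 dvd m} \<inter> (*) 3 ` Pos"
    then show False unfolding Int_iff memPos[of 3, simplified] unfolding mem_Collect_eq by presburger
  qed
  have "EE = Gs {m. 0 < m \<and> \<not> 3 dvd m} * Gs ((*) 3 ` Pos)" using Gs_union[OF disj] split by simp
  also have "Gs {m. 0 < m \<and> \<not> 3 dvd m} = Gs (UA 3 (-1)) * Gs (UB 3 (-1))"
    using Gs_union[OF D] U by simp
  also have "\<dots> = theta 3 (-1) * Gs ((*) 3 ` Odd)"
    using JTP[of 3 "-1"] A0_eq[of 3] by simp
  finally have "EE = theta 3 (-1) * (Gs ((*) 3 ` Odd) * Gs ((*) 3 ` Pos))" by (simp add: algebra_simps)
  then show ?thesis using Gs_inv[of 3] by simp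
qed

lemma E3_theta4: "EE ^ 3 = theta 4 (-3)"
proof -
  have U: "UA 4 (-3) \<union> UB 4 (-3) = Odd" unfolding UA_def UB_def Odd_def
  proof (rule Set.set_eqI)
    fix m :: nat
    show "m \<in> {m. \<exists>n::nat. 1 \<le> n \<and> int m = 4 * int n + - 3} \<union> {m. \<exists>n::nat. int m = 4 * int n - - 3} \<longleftrightarrow> m \<in> {m. odd m}"
      unfolding mem_Collect_eq Un_iff by presburger
  qed
  have D: "UA 4 (-3) \<inter> UB 4 (-3) = {}" unfolding UA_def UB_def
  proof (rule equals0I)
    fix m :: nat
    assume "m \<in> {m. \<exists>n::nat. 1 \<le> n \<and> int m = 4 * int n + - 3} \<inter> {m. \<exists>n::nat. int m = 4 * int n - - 3}"
    then show False unfolding mem_Collect_eq Int_iff by presburger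
  qed
  have O: "Gs Odd = theta 4 (-3) * Gs ((*) 4 ` Odd)"
    using Gs_union[OF D] U JTP[of 4 "-3"] A0_eq[of 4] by simp
  have "EE = Gs Odd * Gs ((*) 2 ` Pos)" using Gs_union[OF Pos_split(2)] Pos_split(1) by simp
  then have "EE = Gs Odd * EE ^ 2" using E2 by simp
  then have "EE * EE ^ 2 = (Gs Odd * EE ^ 2) * EE ^ 2" by (rule arg_cong[where f = "\<lambda>x. x * EE ^ 2"])
  moreover have "EE ^ 3 = EE * EE ^ 2" by (simp add: power3_eq_cube power2_eq_square)
  moreover have "(Gs Odd * EE ^ 2) * EE ^ 2 = Gs Odd * EE ^ 4" by (simp add: mult.assoc power_add[symmetric])
  ultimately have "EE ^ 3 = Gs Odd * EE ^ 4" by simp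
  also have "\<dots> = theta 4 (-3) * (Gs ((*) 4 ` Odd) * Gs ((*) 4 ` Pos))" using O E4 by (simp add: algebra_simps)
  finally show ?thesis using Gs_inv[of 4] by simp
qed



lemma E7: "EE ^ 7 = cnt (UNIV \<times> UNIV) (\<lambda>(k1::int, k2::int). nat (4 * Tri k1 + - 3 * k1) + 4 * nat (3 * Tri k2 + - 1 * k2))"
proof -
  let ?X = "{S. finite S \<and> S \<subseteq> Pos}"
  have "cnt ?X (\<lambda>S. \<Sum>S) = cnt UNIV (\<lambda>k::int. nat (3 * Tri k + - 1 * k))"
    using E_theta3 unfolding Gs_def theta_def by simp
  then have "cnt ?X (\<lambda>S. 4 * \<Sum>S) = cnt UNIV (\<lambda>k::int. 4 * nat (3 * Tri k + - 1 * k))"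
    by (rule cnt_scale) simp
  moreover have "EE ^ 4 = cnt ?X (\<lambda>S. 4 * \<Sum>S)" using E4 Gs_scale[of 4 Pos] by simp
  ultimately have e4: "EE ^ 4 = cnt UNIV (\<lambda>k::int. 4 * nat (3 * Tri k + - 1 * k))" by simp
  have "EE ^ 7 = EE ^ 3 * EE ^ 4" by (simp add: power_add[symmetric])
  also have "\<dots> = cnt UNIV (\<lambda>k::int. nat (4 * Tri k + - 3 * k)) * cnt UNIV (\<lambda>k::int. 4 * nat (3 * Tri k + - 1 * k))"
    using E3_theta4 e4 unfolding theta_def by simp
  also have "\<dots> = cnt (UNIV \<times> UNIV) (\<lambda>(k1::int, k2::int). nat (4 * Tri k1 + - 3 * k1) + 4 * nat (3 * Tri k2 + - 1 * k2))"
    by (rule cnt_mult[OF finfib_theta finfib_scale[OF finfib_theta]]) simp_all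
  finally show ?thesis .
qed

lemma b8_coeff: "Hs I8 $ n = of_nat (b 8 n)"
proof -
  have "{M \<in> {M. set_mset M \<subseteq> I8}. sum_mset M = n} = {M :: nat multiset. (\<forall>x\<in>#M. 0 < x \<and> \<not> 8 dvd x) \<and> sum_mset M = n}"
    unfolding I8_def by auto
  then show ?thesis unfolding Hs_def cnt_nth b_def by simp
qed

lemma b8_even:
  assumes "\<not> (\<exists>k1 k2 :: int. nat (4 * Tri k1 + - 3 * k1) + 4 * nat (3 * Tri k2 + - 1 * k2) = n)"
  shows "even (b 8 n)"
proof -
  have "EE ^ 7 $ n = of_nat (card {p \<in> (UNIV :: int set) \<times> (UNIV :: int set). (\<lambda>(k1, k2). nat (4 * Tri k1 + - 3 * k1) + 4 * nat (3 * Tri k2 + - 1 * k2)) p = n})"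
    unfolding E7 cnt_nth ..
  also have "{p \<in> (UNIV :: int set) \<times> (UNIV :: int set). (\<lambda>(k1, k2). nat (4 * Tri k1 + - 3 * k1) + 4 * nat (3 * Tri k2 + - 1 * k2)) p = n} = {}"
    using assms by auto
  finally have "EE ^ 7 $ n = 0" by simp
  then have "(of_nat (b 8 n) :: bit) = 0" using b8_coeff Hs_I8 by simp
  then show ?thesis by (simp add: of_nat_bit split: if_splits)
qed

lemma fermat_int:
  fixes p :: nat and T :: int
  assumes "prime p" "odd p" "\<not> int p dvd T"
  shows "int p dvd T ^ (p - 1) - 1"
proof -
  let ?a = "nat \<bar>T\<bar>"
  have na: "\<not> p dvd ?a"
  proof
    assume "p dvd ?a"
    then have "int p dvd int ?a" by simp
    then have "int p dvd \<bar>T\<bar>" by simp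
    then show False using assms(3) by simp
  qed
  have "[?a ^ (p - 1) = 1] (mod p)" by (rule fermat_theorem[OF assms(1) na])
  then have "[int (?a ^ (p - 1)) = int 1] (mod int p)" by (simp only: cong_int_iff)
  then have c: "[\<bar>T\<bar> ^ (p - 1) = 1] (mod int p)" by simp
  have "even (p - 1)" using assms(2) by simp
  then have "\<bar>T\<bar> ^ (p - 1) = T ^ (p - 1)" by (simp add: power_even_abs)
  then have "[T ^ (p - 1) = 1] (mod int p)" using c by simp
  then show ?thesis by (simp add: cong_iff_dvd_diff dvd_diff_commute)
qed

lemma key_TD:
  fixes p :: nat and T D :: int
  assumes p: "prime p" "p mod 3 = 2" and odd: "odd p" and h: "int p dvd T^2 + T * D + D^2" and nD: "\<not> int p dvd D"
  shows False
proof -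
  let ?P = "int p"
  have pP: "prime ?P" using p(1) by simp
  have nT: "\<not> ?P dvd T"
  proof
    assume "?P dvd T"
    then have "?P dvd T^2 + T * D" by (simp add: power2_eq_square)
    then have "?P dvd D^2" using h by (metis add_diff_cancel_left' dvd_diff)
    then have "?P dvd D" using pP prime_dvd_power by blast
    then show False using nD by simp
  qed
  have c3: "[T^3 = D^3] (mod ?P)"
  proof -
    have "T^3 - D^3 = (T - D) * (T^2 + T * D + D^2)" by (simp add: algebra_simps power2_eq_square power3_eq_cube)
    then have "?P dvd T^3 - D^3" using h by simp
    then show ?thesis by (simp add: cong_iff_dvd_diff)
  qed
  obtain q where q: "p - 1 = 3 * q + 1"
  proof
    show "p - 1 = 3 * ((p - 1) div 3) + 1" using p(2) by presburger
  qed
  have fT: "[T ^ (p - 1) = 1] (mod ?P)"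
    using fermat_int[OF p(1) odd nT] by (simp add: cong_iff_dvd_diff)
  have fD: "[D ^ (p - 1) = 1] (mod ?P)"
    using fermat_int[OF p(1) odd nD] by (simp add: cong_iff_dvd_diff)
  have eT: "T ^ (p - 1) = (T^3)^q * T" unfolding q by (simp add: power_mult[symmetric] power_add)
  have eD: "D ^ (p - 1) = (D^3)^q * D" unfolding q by (simp add: power_mult[symmetric] power_add)
  have "[(T^3)^q * T = (D^3)^q * T] (mod ?P)" by (intro cong_mult cong_pow c3 cong_refl)
  then have "[(D^3)^q * T = 1] (mod ?P)" using fT eT by (metis cong_sym cong_trans)
  moreover have "[(D^3)^q * D = 1] (mod ?P)" using fD eD by simp
  ultimately have "[(D^3)^q * T = (D^3)^q * D] (mod ?P)" by (metis cong_sym cong_trans)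
  moreover have "coprime ((D^3)^q) ?P"
  proof -
    have "coprime ?P D" by (rule prime_imp_coprime[OF pP nD])
    then have "coprime D ?P" by (simp add: coprime_commute)
    then show ?thesis by simp
  qed
  ultimately have "[T = D] (mod ?P)" by (simp add: cong_mult_lcancel)
  then have tD: "?P dvd T - D" by (simp add: cong_iff_dvd_diff)
  have e3: "3 * D^2 = (T^2 + T * D + D^2) - (T - D) * (T + 2 * D)" by (simp add: algebra_simps power2_eq_square)
  have "?P dvd (T^2 + T * D + D^2) - (T - D) * (T + 2 * D)"
    by (rule dvd_diff[OF h dvd_mult2[OF tD]])
  then have "?P dvd 3 * D^2" unfolding e3 .
  then have "?P dvd 3 \<or> ?P dvd D^2" using pP prime_dvd_mult_iff by blast
  moreover have "\<not> ?P dvd D^2" using nD pP prime_dvd_power by blast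
  ultimately have "?P dvd 3" by simp
  then have "p dvd 3" by presburger
  then have "p = 3 \<or> p = 1" using prime_nat_iff[of 3] by auto
  then show False using p by auto
qed

lemma key_XY:
  fixes p :: nat and X Y :: int
  assumes p: "prime p" "p mod 3 = 2" and odd: "odd p" and h: "int p dvd 3 * X^2 + 4 * Y^2"
  shows "int p dvd X \<and> int p dvd Y"
proof -
  let ?P = "int p"
  have pP: "prime ?P" using p(1) by simp
  have p2: "p \<noteq> 2" "p \<noteq> 3" using p(2) odd by auto
  have n2: "\<not> ?P dvd 2"
  proof
    assume "?P dvd 2"
    then have "p dvd 2" by presburger
    then have "p = 1 \<or> p = 2" using prime_nat_iff[of 2] by auto
    then show False using p(1) p2 by auto
  qed
  have n3: "\<not> ?P dvd 3"
  proof
    assume "?P dvd 3"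
    then have "p dvd 3" by presburger
    then have "p = 1 \<or> p = 3" using prime_nat_iff[of 3] by auto
    then show False using p(1) p2 by auto
  qed
  have Y: "?P dvd Y"
  proof (rule ccontr)
    assume nY: "\<not> ?P dvd Y"
    have nD: "\<not> ?P dvd 4 * Y"
    proof
      assume "?P dvd 4 * Y"
      then have "?P dvd 2 * (2 * Y)" by simp
      then have "?P dvd 2 * Y" using n2 pP prime_dvd_mult_iff by blast
      then show False using n2 nY pP prime_dvd_mult_iff by blast
    qed
    have eq: "(3 * X - 2 * Y)^2 + (3 * X - 2 * Y) * (4 * Y) + (4 * Y)^2 = 3 * (3 * X^2 + 4 * Y^2)"
      by (simp add: algebra_simps power2_eq_square)
    have "?P dvd (3 * X - 2 * Y)^2 + (3 * X - 2 * Y) * (4 * Y) + (4 * Y)^2"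
      unfolding eq by (rule dvd_mult[OF h])
    then show False by (rule key_TD[OF p odd _ nD])
  qed
  then have "?P dvd 4 * Y^2" by (simp add: power2_eq_square)
  then have "?P dvd 3 * X^2" using h by (metis dvd_add_left_iff)
  then have "?P dvd X^2" using n3 pP prime_dvd_mult_iff by blast
  then have "?P dvd X" using pP prime_dvd_power by blast
  then show ?thesis using Y by simp
qed

lemma descent:
  fixes p :: nat and Q :: int
  assumes p: "prime p" "p mod 3 = 2" and odd: "odd p" and nQ: "\<not> int p dvd Q"
  shows "3 * X^2 + 4 * Y^2 \<noteq> int p ^ (2 * e + 1) * Q"
proof (induction e arbitrary: X Y)
  case 0
  show ?case
  proof
    assume h: "3 * X^2 + 4 * Y^2 = int p ^ (2 * 0 + 1) * Q"
    then have "int p dvd 3 * X^2 + 4 * Y^2" by simp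
    then have "int p dvd X \<and> int p dvd Y" by (rule key_XY[OF p odd])
    then have "int p dvd X" "int p dvd Y" by simp_all
    then obtain X' Y' where "X = int p * X'" "Y = int p * Y'" by (auto elim!: dvdE)
    then have "3 * X^2 + 4 * Y^2 = int p * (int p * (3 * X'^2 + 4 * Y'^2))"
      by (simp add: algebra_simps power2_eq_square)
    then have "int p * Q = int p * (int p * (3 * X'^2 + 4 * Y'^2))" using h by simp
    then have "Q = int p * (3 * X'^2 + 4 * Y'^2)" using p(1) by (simp add: prime_gt_0_nat)
    then show False using nQ by simp
  qed
next
  case (Suc e)
  show ?case
  proof
    assume h: "3 * X^2 + 4 * Y^2 = int p ^ (2 * Suc e + 1) * Q"
    then have "int p dvd 3 * X^2 + 4 * Y^2" by simp
    then have "int p dvd X \<and> int p dvd Y" by (rule key_XY[OF p odd])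
    then have "int p dvd X" "int p dvd Y" by simp_all
    then obtain X' Y' where "X = int p * X'" "Y = int p * Y'" by (auto elim!: dvdE)
    then have "3 * X^2 + 4 * Y^2 = int p ^ 2 * (3 * X'^2 + 4 * Y'^2)"
      by (simp add: algebra_simps power2_eq_square)
    moreover have "int p ^ (2 * Suc e + 1) * Q = int p ^ 2 * (int p ^ (2 * e + 1) * Q)"
    proof -
      have "2 * Suc e + 1 = 2 + (2 * e + 1)" by simp
      then show ?thesis by (simp only: power_add mult.assoc)
    qed
    ultimately have "int p ^ 2 * (3 * X'^2 + 4 * Y'^2) = int p ^ 2 * (int p ^ (2 * e + 1) * Q)"
      using h by simp
    then have "3 * X'^2 + 4 * Y'^2 = int p ^ (2 * e + 1) * Q" using p(1) by (simp add: prime_gt_0_nat)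
    then show False using Suc.IH by simp
  qed
qed

lemma sq_mod24:
  fixes p :: nat
  assumes "p mod 6 = 5"
  shows "p^2 mod 24 = 1"
proof -
  define t where "t = p div 6"
  have t: "p = 6 * t + 5" unfolding t_def using assms by presburger
  have ev: "even (t * (3 * t + 5))"
  proof (cases "even t")
    case True then show ?thesis by simp
  next
    case False then have "even (3 * t + 5)" by presburger
    then show ?thesis by simp
  qed
  then obtain s where s: "t * (3 * t + 5) = 2 * s" by (rule evenE)
  have "p^2 = 12 * (t * (3 * t + 5)) + 25" unfolding t by (simp add: algebra_simps power2_eq_square)
  also have "\<dots> = 24 * (s + 1) + 1" using s by simp
  finally show ?thesis by simp
qed

lemma pow_mod24:
  fixes p :: nat
  assumes "p mod 6 = 5"
  shows "p^(2 * e + 2) mod 24 = 1"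
proof -
  have ee: "2 * e + 2 = 2 * (e + 1)" by simp
  have "p^(2 * e + 2) = (p^2)^(e + 1)" by (simp only: ee power_mult)
  also have "\<dots> mod 24 = ((p^2) mod 24)^(e + 1) mod 24" by (rule power_mod[symmetric])
  also have "\<dots> = 1" using sq_mod24[OF assms] by simp
  finally show ?thesis .
qed

theorem theorem3p22:
  fixes p \<alpha> n i :: nat
  assumes "prime p" and "p mod 6 = 5"
    and "1 \<le> \<alpha>" and "1 \<le> i" and "i \<le> p - 1"
  shows "even (b 8 (p ^ (2 * \<alpha>) * n + ((24 * i + 7 * p) * p ^ (2 * \<alpha> - 1) - 7) div 24))"
proof (rule b8_even, rule notI)
  define e where "e = \<alpha> - 1"
  have a1: "2 * \<alpha> - 1 = 2 * e + 1" "2 * \<alpha> = 2 * e + 2" unfolding e_def using assms(3) by auto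
  let ?m = "p ^ (2 * \<alpha>) * n + ((24 * i + 7 * p) * p ^ (2 * \<alpha> - 1) - 7) div 24"
  assume "\<exists>k1 k2 :: int. nat (4 * Tri k1 + - 3 * k1) + 4 * nat (3 * Tri k2 + - 1 * k2) = ?m"
  then obtain k1 k2 :: int where kk: "nat (4 * Tri k1 + - 3 * k1) + 4 * nat (3 * Tri k2 + - 1 * k2) = ?m"
    by blast
  have p3: "p mod 3 = 2" using assms(2) by presburger
  have podd: "odd p" using assms(2) by presburger
  have b1: "\<bar>k1\<bar> \<le> 4 * Tri k1 + - 3 * k1" by (rule tri_bound) simp_all
  have b2: "\<bar>k2\<bar> \<le> 3 * Tri k2 + - 1 * k2" by (rule tri_bound) simp_all
  have n1: "int (nat (4 * Tri k1 + - 3 * k1)) = 4 * Tri k1 + - 3 * k1" using b1 by simp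
  have n2: "int (nat (3 * Tri k2 + - 1 * k2)) = 3 * Tri k2 + - 1 * k2" using b2 by simp
  have "int ?m = int (nat (4 * Tri k1 + - 3 * k1) + 4 * nat (3 * Tri k2 + - 1 * k2))"
    by (rule arg_cong[OF kk[symmetric]])
  also have "\<dots> = (4 * Tri k1 + - 3 * k1) + 4 * (3 * Tri k2 + - 1 * k2)"
    by (simp only: of_nat_add of_nat_mult n1 n2 of_nat_numeral)
  finally have im: "int ?m = (4 * Tri k1 + - 3 * k1) + 4 * (3 * Tri k2 + - 1 * k2)" .
  define X where "X = 4 * k1 - 1"
  define Y where "Y = 6 * k2 + 1"
  have XY: "24 * int ?m + 7 = 3 * X^2 + 4 * Y^2"
    unfolding im X_def Y_def using Tri2[of k1] Tri2[of k2]
    by (simp add: algebra_simps power2_eq_square)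
  define W where "W = (24 * i + 7 * p) * p ^ (2 * e + 1)"
  have Wm: "W mod 24 = 7"
  proof -
    have "W = 24 * (i * p ^ (2 * e + 1)) + 7 * p ^ (2 * e + 2)"
      unfolding W_def by (simp add: algebra_simps)
    then have "W mod 24 = (7 * p ^ (2 * e + 2)) mod 24" by simp
    also have "\<dots> = (7 * (p ^ (2 * e + 2) mod 24)) mod 24" by (simp add: mod_mult_right_eq)
    also have "\<dots> = 7" using pow_mod24[OF assms(2)] by simp
    finally show ?thesis .
  qed
  have Wd: "24 * ((W - 7) div 24) + 7 = W" using Wm by presburger
  define Q where "Q = 24 * p * n + 24 * i + 7 * p"
  have mQ: "24 * ?m + 7 = p ^ (2 * e + 1) * Q"
  proof -
    have "24 * ?m + 7 = 24 * (p ^ (2 * e + 2) * n) + (24 * ((W - 7) div 24) + 7)"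
      unfolding a1 W_def by (simp add: algebra_simps)
    also have "\<dots> = 24 * (p ^ (2 * e + 2) * n) + W" using Wd by simp
    also have "\<dots> = p ^ (2 * e + 1) * Q" unfolding W_def Q_def by (simp add: algebra_simps)
    finally show ?thesis .
  qed
  have nQ: "\<not> int p dvd int Q"
  proof
    assume "int p dvd int Q"
    then have "p dvd Q" by simp
    then have "p dvd 24 * i" unfolding Q_def by (simp add: dvd_add_right_iff mult.assoc)
    then have "p dvd 24 \<or> p dvd i" using assms(1) prime_dvd_mult_iff by blast
    moreover have "\<not> p dvd i"
    proof
      assume "p dvd i"
      then have "p \<le> i" using assms(4) by (simp add: dvd_imp_le)
      then show False using assms(5) assms(4) by simp
    qed
    moreover have "\<not> p dvd 24"
    proof
      assume "p dvd 24"
      then have "p dvd 2 * (2 * (2 * 3))" by simp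
      then have "p dvd 2 \<or> p dvd 3" using assms(1) prime_dvd_mult_iff by blast
      then have "p \<le> 3" by (auto dest: dvd_imp_le)
      then show False using assms(2) by presburger
    qed
    ultimately show False by simp
  qed
  have "3 * X^2 + 4 * Y^2 = int p ^ (2 * e + 1) * int Q"
    using XY arg_cong[OF mQ, of int] by simp
  then show False using descent[OF assms(1) p3 podd nQ] by blast
qed

end
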